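(* Let $q:G'\to G$ be an epimorphism of groups with finite kernel $\Gamma$, let $W$ be a closed connected oriented surface of genus $d\ge1$ with $\pi=\pi_1(W)$, and let $g:\pi\to G$ be a group homomorphism. Then the number $|\mathrm{Hom}_g(\pi,G')|$ is divisible by $|\Gamma|\,|Z(\Gamma)|^{2d-2}$, where $Z(\Gamma)$ is the center of $\Gamma$.
   Context: $\mathrm{Hom}_g(\pi,G')$ is the set of homomorphisms $g':\pi\to G'$ with $qg'=g$. *)

theory Defs
  imports "HOL-Algebra.Algebra"
begin

definition grp_commutator :: "('a, 'b) monoid_scheme \<Rightarrow> 'a \<Rightarrow> 'a \<Rightarrow> 'a" where
  "grp_commutator G x y = x \<otimes>\<^bsub>G\<^esub> y \<otimes>\<^bsub>G\<^esub> inv\<^bsub>G\<^esub> x \<otimes>\<^bsub>G\<^esub> inv\<^bsub>G\<^esub> y"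

definition surface_relator :: "('a, 'b) monoid_scheme \<Rightarrow> nat \<Rightarrow> (nat \<Rightarrow> 'a) \<Rightarrow> (nat \<Rightarrow> 'a) \<Rightarrow> 'a" where
  "surface_relator G d x y =
     foldr (\<lambda>i r. grp_commutator G (x i) (y i) \<otimes>\<^bsub>G\<^esub> r) [0..<d] \<one>\<^bsub>G\<^esub>"

definition center_of :: "('a, 'b) monoid_scheme \<Rightarrow> 'a set \<Rightarrow> 'a set" where
  "center_of G S = {z \<in> S. \<forall>x\<in>S. z \<otimes>\<^bsub>G\<^esub> x = x \<otimes>\<^bsub>G\<^esub> z}"

text \<open>P (with generators a_i, b_i, i<d) is the surface group
  <a_1,b_1,...,a_d,b_d | [a_1,b_1]...[a_d,b_d]> as far as homomorphisms into H are concerned: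
  P is generated by the a_i, b_i, the relator holds, and every tuple in H satisfying
  the relator is the image of the generators under some homomorphism P -> H.\<close>
definition surface_presented_wrt ::
  "('p, 'f) monoid_scheme \<Rightarrow> nat \<Rightarrow> (nat \<Rightarrow> 'p) \<Rightarrow> (nat \<Rightarrow> 'p) \<Rightarrow> ('h, 'k) monoid_scheme \<Rightarrow> bool" where
  "surface_presented_wrt P d a b H \<longleftrightarrow>
     group P \<and> (\<forall>i<d. a i \<in> carrier P \<and> b i \<in> carrier P) \<and>
     generate P (a ` {..<d} \<union> b ` {..<d}) = carrier P \<and>
     surface_relator P d a b = \<one>\<^bsub>P\<^esub> \<and>
     (\<forall>x y. (\<forall>i<d. x i \<in> carrier H \<and> y i \<in> carrier H) \<and> surface_relator H d x y = \<one>\<^bsub>H\<^esub>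
        \<longrightarrow> (\<exists>h\<in>hom P H. \<forall>i<d. h (a i) = x i \<and> h (b i) = y i))"

definition Hom_lifts ::
  "('p, 'f) monoid_scheme \<Rightarrow> ('c, 'e) monoid_scheme \<Rightarrow> ('c \<Rightarrow> 'g) \<Rightarrow> ('p \<Rightarrow> 'g) \<Rightarrow> ('p \<Rightarrow> 'c) set" where
  "Hom_lifts P G' q g =
     {g'. g' \<in> hom P G' \<and> g' \<in> extensional (carrier P) \<and> (\<forall>x\<in>carrier P. q (g' x) = g x)}"

end

theory Submission
  imports Defs
begin

lemma (in group) orbit_card:
  assumes fin: "finite (carrier G)"
    and closed: "\<And>g x. g \<in> carrier G \<Longrightarrow> x \<in> A \<Longrightarrow> act g x \<in> A"
    and one: "\<And>x. x \<in> A \<Longrightarrow> act \<one> x = x"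
    and comp: "\<And>g h x. g \<in> carrier G \<Longrightarrow> h \<in> carrier G \<Longrightarrow> x \<in> A \<Longrightarrow> act (g \<otimes> h) x = act g (act h x)"
    and x: "x \<in> A"
  shows "card (carrier G) = card ((\<lambda>g. act g x) ` carrier G) * card {g \<in> carrier G. act g x = x}"
proof -
  let ?O = "(\<lambda>g. act g x) ` carrier G"
  let ?F = "\<lambda>y. {g \<in> carrier G. act g x = y}"
  have U: "carrier G = \<Union> (?F ` ?O)" by auto
  have cF: "card (?F y) = card {g \<in> carrier G. act g x = x}" if y: "y \<in> ?O" for y
  proof -
    obtain g0 where g0: "g0 \<in> carrier G" "y = act g0 x" using y by auto
    have "bij_betw (\<lambda>s. g0 \<otimes> s) {g \<in> carrier G. act g x = x} (?F y)"
    proof (rule bij_betwI[where g="\<lambda>g. inv g0 \<otimes> g"])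
      show "(\<lambda>s. g0 \<otimes> s) \<in> {g \<in> carrier G. act g x = x} \<rightarrow> ?F y"
        using g0 comp x by auto
      show "(\<lambda>g. inv g0 \<otimes> g) \<in> ?F y \<rightarrow> {g \<in> carrier G. act g x = x}"
      proof
        fix g assume g: "g \<in> ?F y"
        have "act (inv g0 \<otimes> g) x = act (inv g0) (act g0 x)"
          using g g0 comp x by auto
        also have "\<dots> = act (inv g0 \<otimes> g0) x" using g0 comp[of "inv g0" g0 x] x by auto
        also have "\<dots> = x" using g0 one x by simp
        finally show "inv g0 \<otimes> g \<in> {g \<in> carrier G. act g x = x}" using g g0 by auto
      qed
      show "inv g0 \<otimes> (g0 \<otimes> s) = s" if "s \<in> {g \<in> carrier G. act g x = x}" for s
        using that g0 by (simp add: m_assoc[symmetric])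
      show "g0 \<otimes> (inv g0 \<otimes> g) = g" if "g \<in> ?F y" for g
        using that g0 by (simp add: m_assoc[symmetric])
    qed
    then show ?thesis by (simp add: bij_betw_same_card)
  qed
  have "card (carrier G) = (\<Sum>y\<in>?O. card (?F y))"
    apply (subst U) apply (rule card_UN_disjoint) using fin by auto
  also have "\<dots> = (\<Sum>y\<in>?O. card {g \<in> carrier G. act g x = x})"
    using cF by (rule sum.cong[OF refl])
  also have "\<dots> = card ?O * card {g \<in> carrier G. act g x = x}" by simp
  finally show ?thesis .
qed

lemma (in group) orbit_div:
  assumes fin: "finite (carrier G)" and finA: "finite A"
    and closed: "\<And>g x. g \<in> carrier G \<Longrightarrow> x \<in> A \<Longrightarrow> act g x \<in> A"
    and one: "\<And>x. x \<in> A \<Longrightarrow> act \<one> x = x"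
    and comp: "\<And>g h x. g \<in> carrier G \<Longrightarrow> h \<in> carrier G \<Longrightarrow> x \<in> A \<Longrightarrow> act (g \<otimes> h) x = act g (act h x)"
    and winv: "\<And>g x. g \<in> carrier G \<Longrightarrow> x \<in> A \<Longrightarrow> w (act g x) = w x"
    and dv: "\<And>x. x \<in> A \<Longrightarrow> M * card {g \<in> carrier G. act g x = x} dvd card (carrier G) * w x"
  shows "M dvd (\<Sum>x\<in>A. w x)"
  using finA closed one comp winv dv
proof (induction A rule: finite_psubset_induct)
  case (psubset A)
  show ?case
  proof (cases "A = {}")
    case True then show ?thesis by simp
  next
    case False
    then obtain x where x: "x \<in> A" by auto
    let ?O = "(\<lambda>g. act g x) ` carrier G"
    let ?A2 = "A - ?O"
    have OX: "?O \<subseteq> A" using psubset.prems(1) x by auto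
    have xO: "x \<in> ?O" using psubset.prems(2) x by force
    have cl': "act g y \<in> ?A2" if "g \<in> carrier G" "y \<in> ?A2" for g y
    proof -
      have "act g y \<in> A" using psubset.prems(1) that by auto
      moreover have "act g y \<notin> ?O"
      proof
        assume "act g y \<in> ?O"
        then obtain h where h: "h \<in> carrier G" "act g y = act h x" by auto
        have "y = act (inv g \<otimes> g) y" using that psubset.prems(2) by simp
        also have "\<dots> = act (inv g) (act g y)" using that psubset.prems(3)[of "inv g" g y] by auto
        also have "\<dots> = act (inv g \<otimes> h) x" using h that x psubset.prems(3) by auto
        finally have "y \<in> ?O" using h that by auto
        then show False using that by auto
      qed
      ultimately show ?thesis by auto
    qed
    have IH: "M dvd (\<Sum>x\<in>?A2. w x)"
      apply (rule psubset.IH)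
      using xO x apply blast
      using cl' psubset.prems by auto
    have wO: "(\<Sum>y\<in>?O. w y) = card ?O * w x"
    proof -
      have "(\<Sum>y\<in>?O. w y) = (\<Sum>y\<in>?O. w x)"
        apply (rule sum.cong[OF refl]) using psubset.prems(4) x by auto
      then show ?thesis by simp
    qed
    have oc: "card (carrier G) = card ?O * card {g \<in> carrier G. act g x = x}"
      by (rule orbit_card[OF fin, of A act]) (use psubset.prems x in auto)
    have stpos: "card {g \<in> carrier G. act g x = x} > 0"
    proof -
      have "\<one> \<in> {g \<in> carrier G. act g x = x}" using psubset.prems(2) x by simp
      moreover have "finite {g \<in> carrier G. act g x = x}" using fin by simp
      ultimately show ?thesis by (metis card_gt_0_iff empty_iff)
    qed
    have "M * card {g \<in> carrier G. act g x = x} dvd card ?O * w x * card {g \<in> carrier G. act g x = x}"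
      using psubset.prems(5)[OF x] oc by (simp add: mult.commute mult.left_commute)
    then have MO: "M dvd card ?O * w x"
      using stpos by simp
    have "(\<Sum>y\<in>A. w y) = (\<Sum>y\<in>?O. w y) + (\<Sum>y\<in>?A2. w y)"
      using OX psubset.hyps(1) sum.subset_diff by (metis add.commute)
    then show ?thesis using IH MO wO by simp
  qed
qed

lemma (in group) canc1 [simp]: "x \<in> carrier G \<Longrightarrow> w \<in> carrier G \<Longrightarrow> x \<otimes> (inv x \<otimes> w) = w"
  by (simp add: m_assoc[symmetric])
lemma (in group) canc2 [simp]: "x \<in> carrier G \<Longrightarrow> w \<in> carrier G \<Longrightarrow> inv x \<otimes> (x \<otimes> w) = w"
  by (simp add: m_assoc[symmetric])

locale zsetup = group G for G (structure) +
  fixes N assumes nor: "N \<lhd> G"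
begin

abbreviation "Z \<equiv> center_of G N"

lemma N_sub: "N \<subseteq> carrier G" using nor by (simp add: normal_imp_subgroup subgroup.subset)
lemma N_sg: "subgroup N G" using nor by (simp add: normal_imp_subgroup)
lemma Z_sub: "Z \<subseteq> N" by (auto simp: center_of_def)
lemma Z_carr: "z \<in> Z \<Longrightarrow> z \<in> carrier G" using Z_sub N_sub by auto
lemma Z_N: "z \<in> Z \<Longrightarrow> z \<in> N" using Z_sub by auto
lemma N_carr: "x \<in> N \<Longrightarrow> x \<in> carrier G" using N_sub by auto
lemma Z_comm: "z \<in> Z \<Longrightarrow> x \<in> N \<Longrightarrow> z \<otimes> x = x \<otimes> z" by (auto simp: center_of_def)
lemma Z_comm': "z \<in> Z \<Longrightarrow> x \<in> N \<Longrightarrow> w \<in> carrier G \<Longrightarrow> z \<otimes> (x \<otimes> w) = x \<otimes> (z \<otimes> w)"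
proof -
  assume a: "z \<in> Z" "x \<in> N" "w \<in> carrier G"
  have "z \<otimes> (x \<otimes> w) = (z \<otimes> x) \<otimes> w" using a by (simp add: m_assoc Z_carr N_carr)
  also have "\<dots> = (x \<otimes> z) \<otimes> w" using Z_comm[of z x] a by simp
  finally show ?thesis using a by (simp add: m_assoc Z_carr N_carr)
qed

lemma N_conj: "g \<in> carrier G \<Longrightarrow> x \<in> N \<Longrightarrow> g \<otimes> x \<otimes> inv g \<in> N"
  using nor by (simp add: normal.inv_op_closed2)
lemma N_conj': "g \<in> carrier G \<Longrightarrow> x \<in> N \<Longrightarrow> inv g \<otimes> x \<otimes> g \<in> N"
  using N_conj[of "inv g" x] by simp

lemma Z_one: "\<one> \<in> Z" using N_sg by (auto simp: center_of_def subgroup.one_closed N_carr)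
lemma Z_mult: "z \<in> Z \<Longrightarrow> w \<in> Z \<Longrightarrow> z \<otimes> w \<in> Z"
proof -
  assume z: "z \<in> Z" and w: "w \<in> Z"
  show ?thesis unfolding center_of_def
  proof (safe)
    show "z \<otimes> w \<in> N" using z w N_sg Z_N by (simp add: subgroup.m_closed)
    fix x assume x: "x \<in> N"
    have "z \<otimes> w \<otimes> x = z \<otimes> (w \<otimes> x)" using z w x by (simp add: m_assoc N_carr Z_carr)
    also have "\<dots> = z \<otimes> (x \<otimes> w)" using Z_comm[OF w x] by simp
    also have "\<dots> = x \<otimes> (z \<otimes> w)" using Z_comm'[OF z x, of w] w Z_carr by simp
    finally show "z \<otimes> w \<otimes> x = x \<otimes> (z \<otimes> w)" .
  qed
qed
lemma Z_inv: "z \<in> Z \<Longrightarrow> inv z \<in> Z"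
proof -
  assume z: "z \<in> Z"
  show ?thesis unfolding center_of_def
  proof (safe)
    show "inv z \<in> N" using z N_sg Z_N by (simp add: subgroup.m_inv_closed)
    fix x assume x: "x \<in> N"
    have "z \<otimes> x = x \<otimes> z" using Z_comm z x by auto
    then have "inv z \<otimes> (z \<otimes> x) \<otimes> inv z = inv z \<otimes> (x \<otimes> z) \<otimes> inv z" by simp
    then show "inv z \<otimes> x = x \<otimes> inv z" using z x by (simp add: m_assoc N_carr Z_carr)
  qed
qed
lemma Z_sg: "subgroup Z G"
  by (rule subgroupI) (use Z_sub N_sub Z_one Z_mult Z_inv in auto)

lemma Z_conj: "g \<in> carrier G \<Longrightarrow> z \<in> Z \<Longrightarrow> g \<otimes> z \<otimes> inv g \<in> Z"
proof -
  assume g: "g \<in> carrier G" and z: "z \<in> Z"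
  show ?thesis unfolding center_of_def
  proof (safe)
    show "g \<otimes> z \<otimes> inv g \<in> N" using N_conj g z Z_N by auto
    fix x assume x: "x \<in> N"
    have y: "inv g \<otimes> x \<otimes> g \<in> N" using N_conj' g x by auto
    have "g \<otimes> z \<otimes> inv g \<otimes> x = g \<otimes> (z \<otimes> (inv g \<otimes> x \<otimes> g)) \<otimes> inv g"
      using g x z by (simp add: m_assoc N_carr Z_carr)
    also have "\<dots> = g \<otimes> ((inv g \<otimes> x \<otimes> g) \<otimes> z) \<otimes> inv g" using Z_comm[OF z y] by simp
    also have "\<dots> = x \<otimes> (g \<otimes> z \<otimes> inv g)"
      using g x z by (simp add: m_assoc N_carr Z_carr)
    finally show "g \<otimes> z \<otimes> inv g \<otimes> x = x \<otimes> (g \<otimes> z \<otimes> inv g)" .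
  qed
qed
lemma Z_conj': "g \<in> carrier G \<Longrightarrow> z \<in> Z \<Longrightarrow> inv g \<otimes> z \<otimes> g \<in> Z"
  using Z_conj[of "inv g" z] by simp

lemma conj_coset:
  assumes g: "g \<in> carrier G" "h \<in> carrier G" "inv g \<otimes> h \<in> N" and z: "z \<in> Z"
  shows "h \<otimes> z \<otimes> inv h = g \<otimes> z \<otimes> inv g"
proof -
  define c where "c = inv g \<otimes> h"
  have c: "c \<in> N" using g c_def by simp
  have h: "h = g \<otimes> c" using g c_def by simp
  have "h \<otimes> z \<otimes> inv h = g \<otimes> (c \<otimes> z \<otimes> inv c) \<otimes> inv g"
    using h g c z by (simp add: m_assoc N_carr Z_carr inv_mult_group)
  also have "c \<otimes> z \<otimes> inv c = z \<otimes> c \<otimes> inv c" using Z_comm[OF z c] by simp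
  also have "\<dots> = z" using c z by (simp add: m_assoc N_carr Z_carr)
  finally show ?thesis .
qed
lemma conj_coset':
  assumes g: "g \<in> carrier G" "h \<in> carrier G" "inv g \<otimes> h \<in> N" and z: "z \<in> Z"
  shows "inv h \<otimes> z \<otimes> h = inv g \<otimes> z \<otimes> g"
proof -
  define c where "c = inv g \<otimes> h"
  have c: "c \<in> N" using g c_def by simp
  have h: "h = g \<otimes> c" using g c_def by simp
  have z': "inv g \<otimes> z \<otimes> g \<in> Z" using Z_conj' g z by auto
  have "inv h \<otimes> z \<otimes> h = inv c \<otimes> (inv g \<otimes> z \<otimes> g) \<otimes> c"
    using h g c z by (simp add: m_assoc N_carr Z_carr inv_mult_group)
  also have "\<dots> = inv c \<otimes> (c \<otimes> (inv g \<otimes> z \<otimes> g))" using Z_comm[OF z' c] c z' by (simp add: m_assoc N_carr Z_carr)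
  also have "\<dots> = inv g \<otimes> z \<otimes> g" using c z' by (simp add: N_carr Z_carr)
  finally show ?thesis .
qed

end

context zsetup begin

lemma comm_closed: "x \<in> carrier G \<Longrightarrow> y \<in> carrier G \<Longrightarrow> grp_commutator G x y \<in> carrier G"
  by (simp add: grp_commutator_def)

lemma comm_shift:
  assumes x: "x \<in> carrier G" and y: "y \<in> carrier G" and a: "a \<in> Z" and b: "b \<in> N"
  shows "grp_commutator G (x \<otimes> a) (y \<otimes> b) = grp_commutator G x y \<otimes>
     (y \<otimes> (x \<otimes> (inv y \<otimes> a \<otimes> y \<otimes> inv a) \<otimes> inv x \<otimes> (x \<otimes> b \<otimes> inv x \<otimes> inv b)) \<otimes> inv y)"
proof -
  have ac: "a \<in> carrier G" using a Z_carr by auto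
  have bc: "b \<in> carrier G" using b N_carr by auto
  have sw: "b \<otimes> (inv a \<otimes> w) = inv a \<otimes> (b \<otimes> w)" if "w \<in> carrier G" for w
    using Z_comm'[OF Z_inv[OF a] b that] by simp
  show ?thesis unfolding grp_commutator_def
    using x y ac bc by (simp add: m_assoc inv_mult_group sw)
qed

end

definition FR :: "('a, 'b) monoid_scheme \<Rightarrow> nat list \<Rightarrow> (nat \<Rightarrow> 'a) \<Rightarrow> (nat \<Rightarrow> 'a) \<Rightarrow> 'a" where
  "FR G l x y = foldr (\<lambda>i r. grp_commutator G (x i) (y i) \<otimes>\<^bsub>G\<^esub> r) l \<one>\<^bsub>G\<^esub>"

lemma FR_Nil [simp]: "FR G [] x y = \<one>\<^bsub>G\<^esub>" by (simp add: FR_def)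
lemma FR_Cons [simp]: "FR G (i # l) x y = grp_commutator G (x i) (y i) \<otimes>\<^bsub>G\<^esub> FR G l x y"
  by (simp add: FR_def)
lemma surface_relator_FR: "surface_relator G d x y = FR G [0..<d] x y"
  by (simp add: surface_relator_def FR_def)

context zsetup begin

lemma FR_closed: "(\<forall>i\<in>set l. x i \<in> carrier G \<and> y i \<in> carrier G) \<Longrightarrow> FR G l x y \<in> carrier G"
  by (induction l) (auto simp: comm_closed)

definition cong :: "'a \<Rightarrow> 'a \<Rightarrow> bool" where
  "cong x y \<longleftrightarrow> x \<in> carrier G \<and> y \<in> carrier G \<and> inv x \<otimes> y \<in> N"

lemma cong_mult: "cong x x' \<Longrightarrow> cong y y' \<Longrightarrow> cong (x \<otimes> y) (x' \<otimes> y')"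
proof -
  assume a: "cong x x'" "cong y y'"
  then have c: "x \<in> carrier G" "x' \<in> carrier G" "y \<in> carrier G" "y' \<in> carrier G"
    and n: "inv x \<otimes> x' \<in> N" "inv y \<otimes> y' \<in> N" by (auto simp: cong_def)
  have "inv (x \<otimes> y) \<otimes> (x' \<otimes> y') = (inv y \<otimes> (inv x \<otimes> x') \<otimes> y) \<otimes> (inv y \<otimes> y')"
    using c by (simp add: m_assoc inv_mult_group)
  moreover have "inv y \<otimes> (inv x \<otimes> x') \<otimes> y \<in> N" using N_conj' c n by auto
  ultimately show ?thesis using c n N_sg by (simp add: cong_def subgroup.m_closed)
qed

lemma cong_inv: "cong x x' \<Longrightarrow> cong (inv x) (inv x')"
proof -
  assume a: "cong x x'"
  then have c: "x \<in> carrier G" "x' \<in> carrier G" and n: "inv x \<otimes> x' \<in> N" by (auto simp: cong_def)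
  have "inv (inv x) \<otimes> inv x' = x \<otimes> inv (inv x \<otimes> x') \<otimes> inv x"
    using c by (simp add: m_assoc inv_mult_group)
  moreover have "inv (inv x \<otimes> x') \<in> N" using n N_sg by (simp add: subgroup.m_inv_closed)
  ultimately show ?thesis using N_conj c by (simp add: cong_def)
qed

lemma cong_comm: "cong x x' \<Longrightarrow> cong y y' \<Longrightarrow> cong (grp_commutator G x y) (grp_commutator G x' y')"
  unfolding grp_commutator_def by (intro cong_mult cong_inv)

lemma cong_FR: "(\<forall>i\<in>set l. cong (x i) (x' i) \<and> cong (y i) (y' i)) \<Longrightarrow> cong (FR G l x y) (FR G l x' y')"
proof (induction l)
  case Nil then show ?case using N_sg by (simp add: cong_def subgroup.one_closed)
next
  case (Cons i l) then show ?case by (simp add: cong_mult cong_comm)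
qed

definition dl :: "'a \<Rightarrow> 'a \<Rightarrow> 'a \<Rightarrow> 'a \<Rightarrow> 'a" where
  "dl x y a b = y \<otimes> (x \<otimes> (inv y \<otimes> a \<otimes> y \<otimes> inv a) \<otimes> inv x \<otimes> (x \<otimes> b \<otimes> inv x \<otimes> inv b)) \<otimes> inv y"

lemma dl_Z:
  assumes x: "x \<in> carrier G" and y: "y \<in> carrier G" and a: "a \<in> Z" and mu: "x \<otimes> b \<otimes> inv x \<otimes> inv b \<in> Z"
  shows "dl x y a b \<in> Z"
proof -
  have nu: "inv y \<otimes> a \<otimes> y \<otimes> inv a \<in> Z" using Z_conj'[OF y a] Z_inv[OF a] Z_mult by auto
  have "x \<otimes> (inv y \<otimes> a \<otimes> y \<otimes> inv a) \<otimes> inv x \<in> Z" using Z_conj[OF x nu] .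
  then have "x \<otimes> (inv y \<otimes> a \<otimes> y \<otimes> inv a) \<otimes> inv x \<otimes> (x \<otimes> b \<otimes> inv x \<otimes> inv b) \<in> Z"
    using mu Z_mult by auto
  then show ?thesis unfolding dl_def using Z_conj[OF y] by auto
qed

lemma dl_cong:
  assumes c1: "cong x x'" and c2: "cong y y'" and a: "a \<in> Z"
    and mu: "x \<otimes> b \<otimes> inv x \<otimes> inv b \<in> Z"
    and mu': "x' \<otimes> b \<otimes> inv x' \<otimes> inv b = x \<otimes> b \<otimes> inv x \<otimes> inv b"
  shows "dl x' y' a b = dl x y a b"
proof -
  have x: "x \<in> carrier G" "x' \<in> carrier G" "inv x \<otimes> x' \<in> N" using c1 by (auto simp: cong_def)
  have y: "y \<in> carrier G" "y' \<in> carrier G" "inv y \<otimes> y' \<in> N" using c2 by (auto simp: cong_def)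
  have ac: "a \<in> carrier G" using a Z_carr by auto
  have e1: "inv y' \<otimes> a \<otimes> y' = inv y \<otimes> a \<otimes> y" using conj_coset'[OF y a] .
  have nu: "inv y \<otimes> a \<otimes> y \<otimes> inv a \<in> Z" using Z_conj'[OF y(1) a] Z_inv[OF a] Z_mult by auto
  have e2: "x' \<otimes> (inv y \<otimes> a \<otimes> y \<otimes> inv a) \<otimes> inv x' = x \<otimes> (inv y \<otimes> a \<otimes> y \<otimes> inv a) \<otimes> inv x"
    using conj_coset[OF x nu] .
  have w: "x \<otimes> (inv y \<otimes> a \<otimes> y \<otimes> inv a) \<otimes> inv x \<otimes> (x \<otimes> b \<otimes> inv x \<otimes> inv b) \<in> Z"
    using Z_conj[OF x(1) nu] mu Z_mult by auto
  have e3: "y' \<otimes> (x \<otimes> (inv y \<otimes> a \<otimes> y \<otimes> inv a) \<otimes> inv x \<otimes> (x \<otimes> b \<otimes> inv x \<otimes> inv b)) \<otimes> inv y'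
      = y \<otimes> (x \<otimes> (inv y \<otimes> a \<otimes> y \<otimes> inv a) \<otimes> inv x \<otimes> (x \<otimes> b \<otimes> inv x \<otimes> inv b)) \<otimes> inv y"
    using conj_coset[OF y w] .
  show ?thesis unfolding dl_def using e1 e2 e3 mu' by simp
qed

end

context zsetup begin

definition shok :: "nat list \<Rightarrow> (nat \<Rightarrow> 'a) \<Rightarrow> (nat \<Rightarrow> 'a) \<Rightarrow> (nat \<Rightarrow> 'a) \<Rightarrow> (nat \<Rightarrow> 'a) \<Rightarrow> (nat \<Rightarrow> 'a) \<Rightarrow> (nat \<Rightarrow> 'a) \<Rightarrow> bool" where
  "shok l x y x' y' a b \<longleftrightarrow> (\<forall>i\<in>set l. cong (x i) (x' i) \<and> cong (y i) (y' i) \<and> a i \<in> Z \<and> b i \<in> N \<and>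
      x i \<otimes> b i \<otimes> inv (x i) \<otimes> inv (b i) \<in> Z \<and>
      x' i \<otimes> b i \<otimes> inv (x' i) \<otimes> inv (b i) = x i \<otimes> b i \<otimes> inv (x i) \<otimes> inv (b i))"

lemma rel_shift:
  assumes "shok l x y x' y' a b"
  shows "inv (FR G l x y) \<otimes> FR G l (\<lambda>i. x i \<otimes> a i) (\<lambda>i. y i \<otimes> b i) \<in> Z \<and>
         inv (FR G l x' y') \<otimes> FR G l (\<lambda>i. x' i \<otimes> a i) (\<lambda>i. y' i \<otimes> b i) =
         inv (FR G l x y) \<otimes> FR G l (\<lambda>i. x i \<otimes> a i) (\<lambda>i. y i \<otimes> b i)"
  using assms
proof (induction l)
  case Nil then show ?case using Z_one by simp
next
  case (Cons i l)
  have h: "shok l x y x' y' a b" using Cons.prems by (simp add: shok_def)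
  note IH = Cons.IH[OF h]
  have pi: "cong (x i) (x' i)" "cong (y i) (y' i)" "a i \<in> Z" "b i \<in> N"
      "x i \<otimes> b i \<otimes> inv (x i) \<otimes> inv (b i) \<in> Z"
      "x' i \<otimes> b i \<otimes> inv (x' i) \<otimes> inv (b i) = x i \<otimes> b i \<otimes> inv (x i) \<otimes> inv (b i)"
    using Cons.prems by (auto simp: shok_def)
  have cx: "x i \<in> carrier G" "x' i \<in> carrier G" "y i \<in> carrier G" "y' i \<in> carrier G"
    using pi(1,2) by (auto simp: cong_def)
  have ac: "a i \<in> carrier G" "b i \<in> carrier G" using pi(3,4) Z_carr N_carr by auto
  have cl: "\<forall>j\<in>set l. x j \<in> carrier G \<and> y j \<in> carrier G" "\<forall>j\<in>set l. x' j \<in> carrier G \<and> y' j \<in> carrier G"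
    using h by (auto simp: shok_def cong_def)
  have cl2: "\<forall>j\<in>set l. x j \<otimes> a j \<in> carrier G \<and> y j \<otimes> b j \<in> carrier G"
     "\<forall>j\<in>set l. x' j \<otimes> a j \<in> carrier G \<and> y' j \<otimes> b j \<in> carrier G"
    using h by (auto simp: shok_def cong_def Z_carr N_carr)
  define F where "F = FR G l x y"
  define F1 where "F1 = FR G l (\<lambda>i. x i \<otimes> a i) (\<lambda>i. y i \<otimes> b i)"
  define F' where "F' = FR G l x' y'"
  define F1' where "F1' = FR G l (\<lambda>i. x' i \<otimes> a i) (\<lambda>i. y' i \<otimes> b i)"
  have Fc: "F \<in> carrier G" "F1 \<in> carrier G" "F' \<in> carrier G" "F1' \<in> carrier G"
    unfolding F_def F1_def F'_def F1'_def using cl cl2 by (auto intro: FR_closed)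
  define D where "D = inv F \<otimes> F1"
  have DZ: "D \<in> Z" and D': "inv F' \<otimes> F1' = D" using IH unfolding D_def F_def F1_def F'_def F1'_def by auto
  have F1e: "F1 = F \<otimes> D" using Fc unfolding D_def by simp
  have F1e': "F1' = F' \<otimes> D" using Fc D' DZ Z_carr by (metis inv_closed  canc1)
  define \<delta> where "\<delta> = dl (x i) (y i) (a i) (b i)"
  have dZ: "\<delta> \<in> Z" unfolding \<delta>_def using dl_Z cx pi by auto
  have d': "dl (x' i) (y' i) (a i) (b i) = \<delta>" unfolding \<delta>_def using dl_cong pi by auto
  have cs: "grp_commutator G (x i \<otimes> a i) (y i \<otimes> b i) = grp_commutator G (x i) (y i) \<otimes> \<delta>"
    unfolding \<delta>_def dl_def using comm_shift cx pi by auto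
  have cs': "grp_commutator G (x' i \<otimes> a i) (y' i \<otimes> b i) = grp_commutator G (x' i) (y' i) \<otimes> \<delta>"
    using d' unfolding dl_def using comm_shift cx pi by auto
  have dc: "\<delta> \<in> carrier G" "D \<in> carrier G" using dZ DZ Z_carr by auto
  have key: "\<And>c F D. c \<in> carrier G \<Longrightarrow> F \<in> carrier G \<Longrightarrow> D \<in> carrier G \<Longrightarrow>
      inv (c \<otimes> F) \<otimes> (c \<otimes> \<delta> \<otimes> (F \<otimes> D)) = (inv F \<otimes> \<delta> \<otimes> F) \<otimes> D"
    using dc by (simp add: m_assoc inv_mult_group)
  have e1: "inv (FR G (i # l) x y) \<otimes> FR G (i # l) (\<lambda>i. x i \<otimes> a i) (\<lambda>i. y i \<otimes> b i)
      = (inv F \<otimes> \<delta> \<otimes> F) \<otimes> D"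
    using cs F1e key[of "grp_commutator G (x i) (y i)" F D] cx Fc dc comm_closed
    unfolding F_def F1_def by simp
  have e2: "inv (FR G (i # l) x' y') \<otimes> FR G (i # l) (\<lambda>i. x' i \<otimes> a i) (\<lambda>i. y' i \<otimes> b i)
      = (inv F' \<otimes> \<delta> \<otimes> F') \<otimes> D"
    using cs' F1e' key[of "grp_commutator G (x' i) (y' i)" F' D] cx Fc dc comm_closed
    unfolding F'_def F1'_def by simp
  have cF: "cong F F'" unfolding F_def F'_def using h by (auto intro!: cong_FR simp: shok_def)
  have e3: "inv F' \<otimes> \<delta> \<otimes> F' = inv F \<otimes> \<delta> \<otimes> F"
    using conj_coset'[of F F' \<delta>] cF dZ by (simp add: cong_def)
  have "inv F \<otimes> \<delta> \<otimes> F \<otimes> D \<in> Z" using Z_conj'[OF Fc(1) dZ] DZ Z_mult by auto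
  then show ?case using e1 e2 e3 by simp
qed

end

lemma (in group) card_sub_dvd:
  assumes "finite (carrier G)" "subgroup H G" shows "card H dvd card (carrier G)"
proof -
  have "card (carrier G) = card H * card (rcosets H)" using lagrange[OF assms(2)] unfolding order_def by (simp add: mult.commute)
  then show ?thesis by (rule dvdI)
qed

lemma hom_card:
  assumes gE: "group E" and gH: "group H" and h: "h \<in> hom E H" and fin: "finite (carrier E)"
  shows "card (carrier E) = card (h ` carrier E) * card {e \<in> carrier E. h e = \<one>\<^bsub>H\<^esub>}"
proof -
  interpret E: group E by (rule gE)
  interpret H: group H by (rule gH)
  have hc: "\<And>g. g \<in> carrier E \<Longrightarrow> h g \<in> carrier H" using h by (auto simp: hom_def)
  have hm: "\<And>g g'. g \<in> carrier E \<Longrightarrow> g' \<in> carrier E \<Longrightarrow> h (g \<otimes>\<^bsub>E\<^esub> g') = h g \<otimes>\<^bsub>H\<^esub> h g'"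
    using h by (auto simp: hom_def)
  have h1: "h \<one>\<^bsub>E\<^esub> = \<one>\<^bsub>H\<^esub>" using h gE gH by (intro group_hom.hom_one) (simp add: group_hom_def group_hom_axioms_def)
  have oc: "card (carrier E) = card ((\<lambda>g. h g \<otimes>\<^bsub>H\<^esub> \<one>\<^bsub>H\<^esub>) ` carrier E) * card {g \<in> carrier E. h g \<otimes>\<^bsub>H\<^esub> \<one>\<^bsub>H\<^esub> = \<one>\<^bsub>H\<^esub>}"
  proof (rule E.orbit_card[OF fin, of "carrier H" "\<lambda>g y. h g \<otimes>\<^bsub>H\<^esub> y"])
    show "\<And>g x. g \<in> carrier E \<Longrightarrow> x \<in> carrier H \<Longrightarrow> h g \<otimes>\<^bsub>H\<^esub> x \<in> carrier H"
      using hc by simp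
    show "\<And>x. x \<in> carrier H \<Longrightarrow> h \<one>\<^bsub>E\<^esub> \<otimes>\<^bsub>H\<^esub> x = x" using h1 by simp
    show "\<And>g g' x. g \<in> carrier E \<Longrightarrow> g' \<in> carrier E \<Longrightarrow> x \<in> carrier H \<Longrightarrow>
        h (g \<otimes>\<^bsub>E\<^esub> g') \<otimes>\<^bsub>H\<^esub> x = h g \<otimes>\<^bsub>H\<^esub> (h g' \<otimes>\<^bsub>H\<^esub> x)"
      using hm hc by (simp add: H.m_assoc)
    show "\<one>\<^bsub>H\<^esub> \<in> carrier H" by simp
  qed
  have e1: "(\<lambda>g. h g \<otimes>\<^bsub>H\<^esub> \<one>\<^bsub>H\<^esub>) ` carrier E = h ` carrier E"
    by (rule image_cong) (auto simp: hc)
  have e2: "{g \<in> carrier E. h g \<otimes>\<^bsub>H\<^esub> \<one>\<^bsub>H\<^esub> = \<one>\<^bsub>H\<^esub>} = {e \<in> carrier E. h e = \<one>\<^bsub>H\<^esub>}"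
    by (auto simp: hc)
  show ?thesis using oc e1 e2 by simp
qed

lemma (in group) stab_subgroup:
  assumes closed: "\<And>g x. g \<in> carrier G \<Longrightarrow> x \<in> A \<Longrightarrow> act g x \<in> A"
    and one: "\<And>x. x \<in> A \<Longrightarrow> act \<one> x = x"
    and comp: "\<And>g h x. g \<in> carrier G \<Longrightarrow> h \<in> carrier G \<Longrightarrow> x \<in> A \<Longrightarrow> act (g \<otimes> h) x = act g (act h x)"
    and x: "x \<in> A"
  shows "subgroup {g \<in> carrier G. act g x = x} G"
proof (rule subgroupI)
  show "{g \<in> carrier G. act g x = x} \<subseteq> carrier G" by auto
  show "{g \<in> carrier G. act g x = x} \<noteq> {}" using one x by auto
  fix g assume g: "g \<in> {g \<in> carrier G. act g x = x}"
  have "act (inv g) x = act (inv g) (act g x)" using g by simp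
  also have "\<dots> = act (inv g \<otimes> g) x" using comp[of "inv g" g x] g x by simp
  also have "\<dots> = x" using g one x by simp
  finally show "inv g \<in> {g \<in> carrier G. act g x = x}" using g by simp
  fix h assume h: "h \<in> {g \<in> carrier G. act g x = x}"
  show "g \<otimes> h \<in> {g \<in> carrier G. act g x = x}" using g h comp x by simp
qed

lemma FR_cong: "(\<And>i. i \<in> set l \<Longrightarrow> x i = x' i \<and> y i = y' i) \<Longrightarrow> FR G l x y = FR G l x' y'"
  by (induction l) auto

context zsetup begin

lemma cong_refl: "x \<in> carrier G \<Longrightarrow> cong x x"
  using N_sg by (simp add: cong_def subgroup.one_closed)
lemma cong_sym: "cong x y \<Longrightarrow> cong y x"
proof -
  assume a: "cong x y"
  then have c: "x \<in> carrier G" "y \<in> carrier G" "inv x \<otimes> y \<in> N" by (auto simp: cong_def)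
  have "inv (inv x \<otimes> y) = inv y \<otimes> x" using c by (simp add: inv_mult_group)
  then show ?thesis using c N_sg subgroup.m_inv_closed[OF N_sg c(3)] by (simp add: cong_def)
qed
lemma cong_trans: "cong x y \<Longrightarrow> cong y z \<Longrightarrow> cong x z"
proof -
  assume a: "cong x y" "cong y z"
  then have c: "x \<in> carrier G" "y \<in> carrier G" "z \<in> carrier G" "inv x \<otimes> y \<in> N" "inv y \<otimes> z \<in> N"
    by (auto simp: cong_def)
  have "inv x \<otimes> z = (inv x \<otimes> y) \<otimes> (inv y \<otimes> z)" using c by (simp add: m_assoc)
  then show ?thesis using c subgroup.m_closed[OF N_sg c(4) c(5)] by (simp add: cong_def)
qed

lemma FR_conj:
  assumes g: "g \<in> carrier G" and c: "\<forall>i\<in>set l. x i \<in> carrier G \<and> y i \<in> carrier G"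
  shows "FR G l (\<lambda>i. g \<otimes> x i \<otimes> inv g) (\<lambda>i. g \<otimes> y i \<otimes> inv g) = g \<otimes> FR G l x y \<otimes> inv g"
  using c
proof (induction l)
  case Nil then show ?case using g by simp
next
  case (Cons i l)
  have ci: "x i \<in> carrier G" "y i \<in> carrier G" using Cons.prems by auto
  have F: "FR G l x y \<in> carrier G" using Cons.prems by (auto intro: FR_closed)
  have "grp_commutator G (g \<otimes> x i \<otimes> inv g) (g \<otimes> y i \<otimes> inv g) = g \<otimes> grp_commutator G (x i) (y i) \<otimes> inv g"
    unfolding grp_commutator_def using g ci by (simp add: m_assoc inv_mult_group)
  then show ?case using Cons g ci F comm_closed by (simp add: m_assoc)
qed

end

locale cnt = zsetup +
  fixes d :: nat and r :: "nat \<Rightarrow> 'a"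
  assumes r: "\<And>k. k < 2*d \<Longrightarrow> r k \<in> carrier G" and d1: "d \<ge> 1" and finN: "finite N"
begin

definition "T = (\<Pi>\<^sub>E k\<in>{..<2*d}. {c. cong (r k) c})"
definition "R t = FR G [0..<d] (\<lambda>i. t (2*i)) (\<lambda>i. t (2*i+1))"
definition "S = {t \<in> T. R t = \<one>}"
definition "cls t = {s \<in> T. \<forall>k<2*d. k \<noteq> 1 \<longrightarrow> inv (t k) \<otimes> s k \<in> Z}"
definition "cj g t = (\<lambda>k\<in>{..<2*d}. g \<otimes> t k \<otimes> inv g)"
definition "Dx x0 = {g \<in> N. x0 \<otimes> g \<otimes> inv x0 \<otimes> inv g \<in> Z}"
definition "shift s e = (\<lambda>k\<in>{..<2*d}. s k \<otimes> e k)"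

lemma T_carr: "t \<in> T \<Longrightarrow> k < 2*d \<Longrightarrow> t k \<in> carrier G"
  by (auto simp: T_def cong_def PiE_iff)
lemma T_cong: "t \<in> T \<Longrightarrow> k < 2*d \<Longrightarrow> cong (r k) (t k)"
  by (auto simp: T_def PiE_iff extensional_def)
lemma T_cong2: "t \<in> T \<Longrightarrow> s \<in> T \<Longrightarrow> k < 2*d \<Longrightarrow> cong (t k) (s k)"
  using T_cong cong_sym cong_trans by blast
lemma T_ext: "t \<in> T \<Longrightarrow> k \<notin> {..<2*d} \<Longrightarrow> t k = undefined"
  by (auto simp: T_def PiE_iff extensional_def)

lemma fib_finite: "k < 2*d \<Longrightarrow> finite {c. cong (r k) c}"
proof -
  assume k: "k < 2*d"
  have "{c. cong (r k) c} \<subseteq> (\<lambda>n. r k \<otimes> n) ` N"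
  proof
    fix c assume "c \<in> {c. cong (r k) c}"
    then have c: "c \<in> carrier G" "inv (r k) \<otimes> c \<in> N" and rk: "r k \<in> carrier G" by (auto simp: cong_def)
    then have "c = r k \<otimes> (inv (r k) \<otimes> c)" by simp
    then show "c \<in> (\<lambda>n. r k \<otimes> n) ` N" using c by blast
  qed
  then show ?thesis using finN finite_surj by blast
qed

lemma T_finite: "finite T"
  unfolding T_def by (rule finite_PiE) (auto intro: fib_finite)

lemma R_carr: "t \<in> T \<Longrightarrow> R t \<in> carrier G"
  unfolding R_def by (rule FR_closed) (auto intro: T_carr)

lemma cj_T: "g \<in> N \<Longrightarrow> t \<in> T \<Longrightarrow> cj g t \<in> T"
proof -
  assume g: "g \<in> N" and t: "t \<in> T"
  have "cong (r k) (g \<otimes> t k \<otimes> inv g)" if k: "k < 2*d" for k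
  proof -
    have tk: "t k \<in> carrier G" using T_carr t k by auto
    have gc: "g \<in> carrier G" using g N_carr by auto
    have "inv (t k) \<otimes> (g \<otimes> t k \<otimes> inv g) = (inv (t k) \<otimes> g \<otimes> t k) \<otimes> inv g"
      using tk gc by (simp add: m_assoc)
    moreover have "inv (t k) \<otimes> g \<otimes> t k \<in> N" using N_conj'[OF tk g] .
    ultimately have "cong (t k) (g \<otimes> t k \<otimes> inv g)"
      using tk gc subgroup.m_closed[OF N_sg _ subgroup.m_inv_closed[OF N_sg g]] by (simp add: cong_def)
    then show ?thesis using T_cong[OF t k] cong_trans by blast
  qed
  then show ?thesis unfolding T_def cj_def by auto
qed

lemma R_cj: "g \<in> N \<Longrightarrow> t \<in> T \<Longrightarrow> R (cj g t) = g \<otimes> R t \<otimes> inv g"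
proof -
  assume g: "g \<in> N" and t: "t \<in> T"
  have "R (cj g t) = FR G [0..<d] (\<lambda>i. g \<otimes> t (2*i) \<otimes> inv g) (\<lambda>i. g \<otimes> t (2*i+1) \<otimes> inv g)"
    unfolding R_def by (rule FR_cong) (auto simp: cj_def)
  also have "\<dots> = g \<otimes> R t \<otimes> inv g" unfolding R_def
    by (rule FR_conj) (use g N_carr T_carr t in auto)
  finally show ?thesis .
qed

lemma cj_one: "t \<in> T \<Longrightarrow> cj \<one> t = t"
  unfolding cj_def by (rule ext) (auto simp: T_carr T_ext)

lemma cj_comp: "g \<in> N \<Longrightarrow> h \<in> N \<Longrightarrow> t \<in> T \<Longrightarrow> cj (g \<otimes> h) t = cj g (cj h t)"
  unfolding cj_def by (rule ext) (auto simp: T_carr N_carr m_assoc inv_mult_group)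

end

context cnt begin

lemma cls_sub: "cls t \<subseteq> T" by (auto simp: cls_def)

lemma cls_refl: "t \<in> T \<Longrightarrow> t \<in> cls t"
  unfolding cls_def using Z_one T_carr by auto

lemma cls_eq: assumes t: "t \<in> T" and s: "s \<in> cls t" shows "cls s = cls t"
proof -
  have sT: "s \<in> T" using s cls_sub by auto
  have z: "\<And>k. k < 2*d \<Longrightarrow> k \<noteq> 1 \<Longrightarrow> inv (t k) \<otimes> s k \<in> Z" using s by (auto simp: cls_def)
  show ?thesis
  proof (rule Set.set_eqI, rule iffI)
    fix u assume u: "u \<in> cls s"
    have "inv (t k) \<otimes> u k \<in> Z" if k: "k < 2*d" "k \<noteq> 1" for k
    proof -
      have uT: "u \<in> T" using u cls_sub by auto
      have "inv (t k) \<otimes> u k = (inv (t k) \<otimes> s k) \<otimes> (inv (s k) \<otimes> u k)"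
        using T_carr[OF t] T_carr[OF sT] T_carr[OF uT] k by (simp add: m_assoc)
      then show ?thesis using z[OF k] u k Z_mult by (auto simp: cls_def)
    qed
    then show "u \<in> cls t" using u by (auto simp: cls_def)
  next
    fix u assume u: "u \<in> cls t"
    have "inv (s k) \<otimes> u k \<in> Z" if k: "k < 2*d" "k \<noteq> 1" for k
    proof -
      have uT: "u \<in> T" using u cls_sub by auto
      have "inv (s k) \<otimes> u k = inv (inv (t k) \<otimes> s k) \<otimes> (inv (t k) \<otimes> u k)"
        using T_carr[OF t] T_carr[OF sT] T_carr[OF uT] k by (simp add: m_assoc inv_mult_group)
      then show ?thesis using z[OF k] u k Z_mult Z_inv by (auto simp: cls_def)
    qed
    then show "u \<in> cls s" using u by (auto simp: cls_def)
  qed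
qed

lemma cls_disj: "t \<in> T \<Longrightarrow> t' \<in> T \<Longrightarrow> cls t \<noteq> cls t' \<Longrightarrow> cls t \<inter> cls t' = {}"
  using cls_eq by blast

lemma cls_Union: "\<Union> (cls ` T) = T"
  using cls_sub cls_refl by blast

lemma cj_inv: "g \<in> N \<Longrightarrow> t \<in> T \<Longrightarrow> cj (inv g) (cj g t) = t"
  using cj_comp[of "inv g" g t] cj_one subgroup.m_inv_closed[OF N_sg] N_carr by simp

lemma cj_cls_sub: assumes g: "g \<in> N" and t: "t \<in> T" shows "cj g ` cls t \<subseteq> cls (cj g t)"
proof
  fix u assume "u \<in> cj g ` cls t"
  then obtain s where s: "s \<in> cls t" "u = cj g s" by auto
  have sT: "s \<in> T" using s cls_sub by auto
  have gc: "g \<in> carrier G" using g N_carr by auto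
  have "inv (cj g t k) \<otimes> cj g s k \<in> Z" if k: "k < 2*d" "k \<noteq> 1" for k
  proof -
    have zk: "inv (t k) \<otimes> s k \<in> Z" using s k by (auto simp: cls_def)
    have "inv (cj g t k) \<otimes> cj g s k = g \<otimes> (inv (t k) \<otimes> s k) \<otimes> inv g"
      using k gc T_carr[OF t] T_carr[OF sT] by (simp add: cj_def m_assoc inv_mult_group)
    then show ?thesis using Z_conj[OF gc zk] by simp
  qed
  then show "u \<in> cls (cj g t)" using s cj_T[OF g sT] by (auto simp: cls_def)
qed

lemma cj_cls: assumes g: "g \<in> N" and t: "t \<in> T" shows "cj g ` cls t = cls (cj g t)"
proof
  show "cj g ` cls t \<subseteq> cls (cj g t)" by (rule cj_cls_sub[OF g t])
  show "cls (cj g t) \<subseteq> cj g ` cls t"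
  proof
    fix u assume u: "u \<in> cls (cj g t)"
    have ig: "inv g \<in> N" using g N_sg by (simp add: subgroup.m_inv_closed)
    have uT: "u \<in> T" using u cls_sub by auto
    have "cj (inv g) u \<in> cls (cj (inv g) (cj g t))" using cj_cls_sub[OF ig cj_T[OF g t]] u by auto
    then have "cj (inv g) u \<in> cls t" using cj_inv[OF g t] by simp
    moreover have "u = cj g (cj (inv g) u)" using cj_inv[OF ig uT] g N_carr by simp
    ultimately show "u \<in> cj g ` cls t" by blast
  qed
qed

lemma cj_inj: "g \<in> N \<Longrightarrow> inj_on (cj g) T"
  by (rule inj_on_inverseI[of _ "cj (inv g)"]) (simp add: cj_inv)

lemma card_cj: assumes g: "g \<in> N" and t: "t \<in> T"
  shows "card (cj g ` cls t \<inter> S) = card (cls t \<inter> S)"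
proof -
  have gc: "g \<in> carrier G" using g N_carr by auto
  have e: "cj g ` cls t \<inter> S = cj g ` (cls t \<inter> S)"
  proof (rule Set.set_eqI, rule iffI)
    fix u assume "u \<in> cj g ` cls t \<inter> S"
    then obtain s where s: "s \<in> cls t" "u = cj g s" "R u = \<one>" unfolding S_def by blast
    have sT: "s \<in> T" using s cls_sub by auto
    have e1: "g \<otimes> R s \<otimes> inv g = \<one>" using s R_cj[OF g sT] by simp
    have "R s = inv g \<otimes> (g \<otimes> R s \<otimes> inv g) \<otimes> g" using gc R_carr[OF sT] by (simp add: m_assoc)
    then have "R s = \<one>" using e1 gc by simp
    then show "u \<in> cj g ` (cls t \<inter> S)" using s sT by (auto simp: S_def)
  next
    fix u assume "u \<in> cj g ` (cls t \<inter> S)"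
    then obtain s where s: "s \<in> cls t" "u = cj g s" "s \<in> S" by auto
    have sT: "s \<in> T" using s cls_sub by auto
    have "R u = \<one>" using s R_cj[OF g sT] gc by (simp add: S_def)
    then show "u \<in> cj g ` cls t \<inter> S" using s cj_T[OF g sT] by (auto simp: S_def)
  qed
  have "cls t \<inter> S \<subseteq> T" using cls_sub by auto
  then have "inj_on (cj g) (cls t \<inter> S)" by (rule inj_on_subset[OF cj_inj[OF g]])
  then have "card (cj g ` (cls t \<inter> S)) = card (cls t \<inter> S)" by (rule card_image)
  then show ?thesis unfolding e .
qed

lemma card_S_sum: "card S = (\<Sum>c\<in>cls ` T. card (c \<inter> S))"
proof -
  have "S = \<Union> ((\<lambda>c. c \<inter> S) ` (cls ` T))" using cls_Union S_def by auto
  moreover have "card (\<Union> ((\<lambda>c. c \<inter> S) ` (cls ` T))) = (\<Sum>c\<in>cls ` T. card (c \<inter> S))"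
  proof (rule card_UN_disjoint)
    show "finite (cls ` T)" using T_finite by simp
    show "\<forall>c\<in>cls ` T. finite (c \<inter> S)" using T_finite cls_sub finite_subset by blast
    show "\<forall>c\<in>cls ` T. \<forall>c'\<in>cls ` T. c \<noteq> c' \<longrightarrow> c \<inter> S \<inter> (c' \<inter> S) = {}"
      using cls_disj by blast
  qed
  ultimately show ?thesis by simp
qed

lemma stab_Dx: assumes t: "t \<in> T" and g: "g \<in> N" and st: "cj g ` cls t = cls t"
  shows "g \<in> Dx (t 0)"
proof -
  have gc: "g \<in> carrier G" using g N_carr by auto
  have "cj g t \<in> cls t" using st cls_refl[OF t] by blast
  then have "inv (t 0) \<otimes> (g \<otimes> t 0 \<otimes> inv g) \<in> Z" using d1 by (auto simp: cls_def cj_def)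
  moreover have t0: "t 0 \<in> carrier G" using T_carr[OF t] d1 by auto
  ultimately have z: "inv (t 0) \<otimes> g \<otimes> t 0 \<otimes> inv g \<in> Z" using gc by (simp add: m_assoc)
  have "t 0 \<otimes> g \<otimes> inv (t 0) \<otimes> inv g = t 0 \<otimes> inv (inv (t 0) \<otimes> g \<otimes> t 0 \<otimes> inv g) \<otimes> inv (t 0)"
    using t0 gc by (simp add: m_assoc inv_mult_group)
  then have "t 0 \<otimes> g \<otimes> inv (t 0) \<otimes> inv g \<in> Z" using Z_conj[OF t0 Z_inv[OF z]] by simp
  then show ?thesis using g by (simp add: Dx_def)
qed

end

context cnt begin

lemma Dx_sg: assumes t0: "t0 \<in> carrier G" shows "subgroup (Dx t0) G"
proof (rule subgroupI)
  show "Dx t0 \<subseteq> carrier G" using N_carr by (auto simp: Dx_def)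
  show "Dx t0 \<noteq> {}" using t0 Z_one subgroup.one_closed[OF N_sg] by (auto simp: Dx_def)
  fix g assume g: "g \<in> Dx t0"
  then have gN: "g \<in> N" and mg: "t0 \<otimes> g \<otimes> inv t0 \<otimes> inv g \<in> Z" by (auto simp: Dx_def)
  have gc: "g \<in> carrier G" using gN N_carr by auto
  have "t0 \<otimes> inv g \<otimes> inv t0 \<otimes> inv (inv g) = inv g \<otimes> inv (t0 \<otimes> g \<otimes> inv t0 \<otimes> inv g) \<otimes> g"
    using gc t0 by (simp add: m_assoc inv_mult_group)
  moreover have "inv g \<otimes> inv (t0 \<otimes> g \<otimes> inv t0 \<otimes> inv g) \<otimes> g \<in> Z"
    using Z_conj'[OF gc Z_inv[OF mg]] .
  ultimately show "inv g \<in> Dx t0" using subgroup.m_inv_closed[OF N_sg gN] by (simp add: Dx_def)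
  fix h assume h: "h \<in> Dx t0"
  then have hN: "h \<in> N" and mh: "t0 \<otimes> h \<otimes> inv t0 \<otimes> inv h \<in> Z" by (auto simp: Dx_def)
  have hc: "h \<in> carrier G" using hN N_carr by auto
  have "t0 \<otimes> (g \<otimes> h) \<otimes> inv t0 \<otimes> inv (g \<otimes> h) =
      (t0 \<otimes> g \<otimes> inv t0 \<otimes> inv g) \<otimes> (g \<otimes> (t0 \<otimes> h \<otimes> inv t0 \<otimes> inv h) \<otimes> inv g)"
    using gc hc t0 by (simp add: m_assoc inv_mult_group)
  moreover have "(t0 \<otimes> g \<otimes> inv t0 \<otimes> inv g) \<otimes> (g \<otimes> (t0 \<otimes> h \<otimes> inv t0 \<otimes> inv h) \<otimes> inv g) \<in> Z"
    using Z_mult[OF mg Z_conj[OF gc mh]] .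
  ultimately show "g \<otimes> h \<in> Dx t0" using subgroup.m_closed[OF N_sg gN hN] by (simp add: Dx_def)
qed

lemma Dx_N: "Dx t0 \<subseteq> N" by (auto simp: Dx_def)

definition "EC t = (\<Pi>\<^sub>E k\<in>{..<2*d}. (if k = 1 then Dx (t 0) else Z))"
definition "chi t e = inv (R t) \<otimes> R (shift t e)"

lemma EC_mem: "e \<in> EC t \<Longrightarrow> k < 2*d \<Longrightarrow> e k \<in> (if k = 1 then Dx (t 0) else Z)"
  unfolding EC_def using PiE_mem[of e "{..<2*d}" "\<lambda>k. if k = 1 then Dx (t 0) else Z" k] by simp
lemma EC_N: "e \<in> EC t \<Longrightarrow> k < 2*d \<Longrightarrow> e k \<in> N"
proof -
  assume a: "e \<in> EC t" "k < 2*d"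
  have m: "e k \<in> (if k = 1 then Dx (t 0) else Z)" by (rule EC_mem[OF a])
  show ?thesis
  proof (cases "k = 1")
    case True then show ?thesis using m Dx_N by auto
  next
    case False then show ?thesis using m Z_sub by auto
  qed
qed
lemma EC_Z: "e \<in> EC t \<Longrightarrow> k < 2*d \<Longrightarrow> k \<noteq> 1 \<Longrightarrow> e k \<in> Z"
proof -
  assume a: "e \<in> EC t" "k < 2*d" "k \<noteq> 1"
  have "e k \<in> (if k = 1 then Dx (t 0) else Z)" by (rule EC_mem[OF a(1,2)])
  then show ?thesis using a(3) by simp
qed
lemma EC_1: "e \<in> EC t \<Longrightarrow> e 1 \<in> Dx (t 0)"
proof -
  assume a: "e \<in> EC t"
  have "e 1 \<in> (if (1::nat) = 1 then Dx (t 0) else Z)" by (rule EC_mem[OF a]) (use d1 in simp)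
  then show ?thesis by simp
qed

lemma shift_cls: assumes t: "t \<in> T" and s: "s \<in> cls t" and e: "e \<in> EC t" shows "shift s e \<in> cls t"
proof -
  have sT: "s \<in> T" using s cls_sub by auto
  have "cong (r k) (s k \<otimes> e k)" if k: "k < 2*d" for k
  proof -
    have "cong (s k) (s k \<otimes> e k)" using T_carr[OF sT k] EC_N[OF e k] N_carr by (simp add: cong_def)
    then show ?thesis using T_cong[OF sT k] cong_trans by blast
  qed
  then have T1: "shift s e \<in> T" unfolding T_def shift_def by auto
  have "inv (t k) \<otimes> shift s e k \<in> Z" if k: "k < 2*d" "k \<noteq> 1" for k
  proof -
    have "inv (t k) \<otimes> shift s e k = (inv (t k) \<otimes> s k) \<otimes> e k"
      using k T_carr[OF t] T_carr[OF sT] EC_N[OF e] N_carr by (simp add: shift_def m_assoc)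
    then show ?thesis using s k EC_Z[OF e] Z_mult by (auto simp: cls_def)
  qed
  then show ?thesis using T1 by (auto simp: cls_def)
qed

lemma R_shift_FR: "R (shift s e) = FR G [0..<d] (\<lambda>i. s (2*i) \<otimes> e (2*i)) (\<lambda>i. s (2*i+1) \<otimes> e (2*i+1))"
  unfolding R_def by (rule FR_cong) (auto simp: shift_def)

lemma shift_R: assumes t: "t \<in> T" and s: "s \<in> cls t" and e: "e \<in> EC t"
  shows "inv (R s) \<otimes> R (shift s e) = chi t e \<and> chi t e \<in> Z"
proof -
  have sT: "s \<in> T" using s cls_sub by auto
  have sh: "shok [0..<d] (\<lambda>i. t (2*i)) (\<lambda>i. t (2*i+1)) (\<lambda>i. s (2*i)) (\<lambda>i. s (2*i+1))
      (\<lambda>i. e (2*i)) (\<lambda>i. e (2*i+1))"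
    unfolding shok_def
  proof (intro ballI conjI)
    fix i assume "i \<in> set [0..<d]"
    then have i: "i < d" by simp
    have k1: "2*i < 2*d" "2*i+1 < 2*d" using i by auto
    show "cong (t (2*i)) (s (2*i))" "cong (t (2*i+1)) (s (2*i+1))" using T_cong2[OF t sT] k1 by auto
    show "e (2*i) \<in> Z" using EC_Z[OF e k1(1)] by auto
    show bN: "e (2*i+1) \<in> N" using EC_N[OF e k1(2)] .
    have tc: "t (2*i) \<in> carrier G" "s (2*i) \<in> carrier G" using T_carr t sT k1 by auto
    have bc: "e (2*i+1) \<in> carrier G" using bN N_carr by auto
    show mu: "t (2*i) \<otimes> e (2*i+1) \<otimes> inv (t (2*i)) \<otimes> inv (e (2*i+1)) \<in> Z"
    proof (cases "i = 0")
      case True then show ?thesis using EC_1[OF e] by (simp add: Dx_def)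
    next
      case False
      then have bZ: "e (2*i+1) \<in> Z" using EC_Z[OF e k1(2)] by auto
      show ?thesis using Z_mult[OF Z_conj[OF tc(1) bZ] Z_inv[OF bZ]] .
    qed
    show "s (2*i) \<otimes> e (2*i+1) \<otimes> inv (s (2*i)) \<otimes> inv (e (2*i+1)) =
          t (2*i) \<otimes> e (2*i+1) \<otimes> inv (t (2*i)) \<otimes> inv (e (2*i+1))"
    proof (cases "i = 0")
      case True
      define z where "z = inv (t 0) \<otimes> s 0"
      have zZ: "z \<in> Z" using s d1 unfolding z_def by (auto simp: cls_def)
      have zc: "z \<in> carrier G" using zZ Z_carr by auto
      have s0: "s 0 = t 0 \<otimes> z" using tc True unfolding z_def by simp
      have "s 0 \<otimes> e 1 \<otimes> inv (s 0) = t 0 \<otimes> (z \<otimes> e 1 \<otimes> inv z) \<otimes> inv (t 0)"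
        using s0 tc zc bc True by (simp add: m_assoc inv_mult_group)
      also have "z \<otimes> e 1 \<otimes> inv z = e 1 \<otimes> z \<otimes> inv z" using Z_comm[OF zZ] bN True by simp
      also have "\<dots> = e 1" using zc bc True by (simp add: m_assoc)
      finally show ?thesis using True by simp
    next
      case False
      then have bZ: "e (2*i+1) \<in> Z" using EC_Z[OF e k1(2)] by auto
      have "s (2*i) \<otimes> e (2*i+1) \<otimes> inv (s (2*i)) = t (2*i) \<otimes> e (2*i+1) \<otimes> inv (t (2*i))"
        using conj_coset[of "t (2*i)" "s (2*i)" "e (2*i+1)"] T_cong2[OF t sT k1(1)] bZ
        by (simp add: cong_def)
      then show ?thesis by simp
    qed
  qed
  note rs = rel_shift[OF sh]
  show ?thesis using rs unfolding chi_def R_shift_FR unfolding R_def by simp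
qed

lemma R_shift: "t \<in> T \<Longrightarrow> s \<in> cls t \<Longrightarrow> e \<in> EC t \<Longrightarrow> R (shift s e) = R s \<otimes> chi t e"
proof -
  assume a: "t \<in> T" "s \<in> cls t" "e \<in> EC t"
  have sT: "s \<in> T" using a cls_sub by auto
  have h: "inv (R s) \<otimes> R (shift s e) = chi t e" using shift_R[OF a] by simp
  have "R (shift s e) = R s \<otimes> (inv (R s) \<otimes> R (shift s e))"
  proof -
    have "shift s e \<in> T" using shift_cls[OF a] cls_sub by auto
    then show ?thesis using R_carr[OF sT] R_carr by simp
  qed
  then show ?thesis using h by simp
qed

end

context cnt begin

definition "EG t = product_group {..<2*d} (\<lambda>k. G\<lparr>carrier := (if k = 1 then Dx (t 0) else Z)\<rparr>)"
definition "ZG = G\<lparr>carrier := Z\<rparr>"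
definition "K t = {e \<in> EC t. chi t e = \<one>}"

lemma t0c: "t \<in> T \<Longrightarrow> t 0 \<in> carrier G" using T_carr d1 by auto

lemma comp_group: "t \<in> T \<Longrightarrow> group (G\<lparr>carrier := (if k = 1 then Dx (t 0) else Z)\<rparr>)"
  using subgroup_imp_group[OF Dx_sg[OF t0c]] subgroup_imp_group[OF Z_sg] by (cases "k = 1") auto

lemma EG_group: "t \<in> T \<Longrightarrow> group (EG t)"
  unfolding EG_def by (rule product_group) (rule comp_group)

lemma EG_carrier [simp]: "carrier (EG t) = EC t"
  by (simp add: EG_def EC_def)

lemma EG_mult: "e \<otimes>\<^bsub>EG t\<^esub> e' = (\<lambda>k\<in>{..<2*d}. e k \<otimes> e' k)"
  by (simp add: EG_def)

lemma EG_one: "\<one>\<^bsub>EG t\<^esub> = (\<lambda>k\<in>{..<2*d}. \<one>)"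
  by (simp add: EG_def)

lemma ZG_group: "group ZG" unfolding ZG_def by (rule subgroup_imp_group[OF Z_sg])

lemma EC_finite: "finite (EC t)"
  unfolding EC_def
proof (rule finite_PiE)
  show "finite {..<2*d}" by simp
  fix k show "finite (if k = 1 then Dx (t 0) else Z)"
    using finite_subset[OF Dx_N finN] finite_subset[OF Z_sub finN] by (cases "k = 1") auto
qed

lemma EC_carr: "e \<in> EC t \<Longrightarrow> k < 2*d \<Longrightarrow> e k \<in> carrier G" using EC_N N_carr by auto

lemma shift_mult: "s \<in> T \<Longrightarrow> e \<in> EC t \<Longrightarrow> e' \<in> EC t \<Longrightarrow> shift (shift s e) e' = shift s (e \<otimes>\<^bsub>EG t\<^esub> e')"
  unfolding shift_def EG_mult by (rule ext) (auto simp: m_assoc T_carr EC_carr)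

lemma shift_one: "s \<in> T \<Longrightarrow> shift s \<one>\<^bsub>EG t\<^esub> = s"
  unfolding shift_def EG_one by (rule ext) (auto simp: T_carr T_ext)

lemma shift_fix: assumes s: "s \<in> T" and e: "e \<in> EC t" and f: "shift s e = s" shows "e = \<one>\<^bsub>EG t\<^esub>"
proof (rule ext)
  fix k show "e k = \<one>\<^bsub>EG t\<^esub> k"
  proof (cases "k < 2*d")
    case True
    have "s k \<otimes> e k = s k" using fun_cong[OF f, of k] True by (simp add: shift_def)
    then have "e k = \<one>" using T_carr[OF s True] EC_carr[OF e True] by (metis l_cancel_one)
    then show ?thesis using True by (simp add: EG_one)
  next
    case False
    then show ?thesis using e by (simp add: EG_one EC_def PiE_def extensional_def)
  qed
qed

lemma chi_Z: "t \<in> T \<Longrightarrow> e \<in> EC t \<Longrightarrow> chi t e \<in> Z"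
  using shift_R cls_refl by blast

lemma chi_hom: assumes t: "t \<in> T" shows "chi t \<in> hom (EG t) ZG"
proof (rule homI)
  fix e assume "e \<in> carrier (EG t)"
  then show "chi t e \<in> carrier ZG" using chi_Z t by (simp add: ZG_def)
next
  fix e e' assume e: "e \<in> carrier (EG t)" and e': "e' \<in> carrier (EG t)"
  have e1: "e \<in> EC t" "e' \<in> EC t" using e e' by auto
  have sc: "shift t e \<in> cls t" using shift_cls[OF t cls_refl[OF t] e1(1)] .
  have "chi t (e \<otimes>\<^bsub>EG t\<^esub> e') = inv (R t) \<otimes> R (shift (shift t e) e')"
    unfolding chi_def using shift_mult[OF t e1] by simp
  also have "\<dots> = inv (R t) \<otimes> (R (shift t e) \<otimes> chi t e')" using R_shift[OF t sc e1(2)] by simp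
  also have "\<dots> = chi t e \<otimes> chi t e'"
    unfolding chi_def using R_carr[OF t] R_carr sc cls_sub chi_Z[OF t e1(2)] Z_carr
    by (simp add: m_assoc chi_def subset_iff)
  finally show "chi t (e \<otimes>\<^bsub>EG t\<^esub> e') = chi t e \<otimes>\<^bsub>ZG\<^esub> chi t e'" by (simp add: ZG_def)
qed

lemma K_kernel: "K t = kernel (EG t) ZG (chi t)"
  by (simp add: K_def kernel_def ZG_def)

lemma K_sg: "t \<in> T \<Longrightarrow> subgroup (K t) (EG t)"
proof -
  assume t: "t \<in> T"
  interpret gh: group_hom "EG t" ZG "chi t"
    by (simp add: group_hom_def group_hom_axioms_def EG_group[OF t] ZG_group chi_hom[OF t])
  show ?thesis using gh.subgroup_kernel K_kernel by simp
qed

end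

context cnt begin

lemma K_sub: "K t \<subseteq> EC t" by (auto simp: K_def)

lemma K_dvd: assumes t: "t \<in> T" shows "card (K t) dvd card (cls t \<inter> S)"
proof -
  interpret E: group "EG t" by (rule EG_group[OF t])
  have sg: "subgroup (K t) (EG t)" by (rule K_sg[OF t])
  define H where "H = (EG t)\<lparr>carrier := K t\<rparr>"
  interpret H: group H unfolding H_def by (rule E.subgroup_imp_group[OF sg])
  have Hc [simp]: "carrier H = K t" by (simp add: H_def)
  have Hm [simp]: "x \<otimes>\<^bsub>H\<^esub> y = x \<otimes>\<^bsub>EG t\<^esub> y" for x y by (simp add: H_def)
  have Ho [simp]: "\<one>\<^bsub>H\<^esub> = \<one>\<^bsub>EG t\<^esub>" by (simp add: H_def)
  have KE: "e \<in> K t \<Longrightarrow> e \<in> carrier (EG t)" for e using K_sub by auto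
  have Kinv: "e \<in> K t \<Longrightarrow> inv\<^bsub>EG t\<^esub> e \<in> K t" for e using subgroup.m_inv_closed[OF sg] by simp
  have Kchi: "e \<in> K t \<Longrightarrow> chi t e = \<one>" for e by (simp add: K_def)
  define act where "act e s = shift s (inv\<^bsub>EG t\<^esub> e)" for e s
  have fin: "finite (carrier H)" using EC_finite K_sub finite_subset by (simp, blast)
  have "card (K t) dvd (\<Sum>s\<in>cls t \<inter> S. (1::nat))"
  proof (rule H.orbit_div[OF fin, of "cls t \<inter> S" act "\<lambda>_. 1" "card (K t)"])
    show "finite (cls t \<inter> S)" using T_finite cls_sub finite_subset by blast
    show "act g x \<in> cls t \<inter> S" if g: "g \<in> carrier H" and x: "x \<in> cls t \<inter> S" for g x
    proof -
      have ig: "inv\<^bsub>EG t\<^esub> g \<in> K t" using Kinv g by simp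
      have igE: "inv\<^bsub>EG t\<^esub> g \<in> EC t" using ig K_sub by auto
      have c: "act g x \<in> cls t" unfolding act_def using shift_cls[OF t _ igE] x by auto
      have "R (act g x) = R x \<otimes> chi t (inv\<^bsub>EG t\<^esub> g)" unfolding act_def using R_shift[OF t _ igE] x by auto
      also have "\<dots> = \<one>" using Kchi[OF ig] x by (simp add: S_def)
      finally show ?thesis using c cls_sub by (auto simp: S_def)
    qed
    show "act \<one>\<^bsub>H\<^esub> x = x" if "x \<in> cls t \<inter> S" for x
      unfolding act_def using shift_one that cls_sub by auto
    show "act (g \<otimes>\<^bsub>H\<^esub> h) x = act g (act h x)" if "g \<in> carrier H" "h \<in> carrier H" "x \<in> cls t \<inter> S" for g h x
    proof -
      have gh: "g \<in> carrier (EG t)" "h \<in> carrier (EG t)" using that KE by auto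
      have "inv\<^bsub>EG t\<^esub> (g \<otimes>\<^bsub>EG t\<^esub> h) = inv\<^bsub>EG t\<^esub> h \<otimes>\<^bsub>EG t\<^esub> inv\<^bsub>EG t\<^esub> g"
        using gh by (simp add: E.inv_mult_group)
      moreover have "x \<in> T" using that cls_sub by auto
      moreover have "inv\<^bsub>EG t\<^esub> h \<in> EC t" "inv\<^bsub>EG t\<^esub> g \<in> EC t"
        using E.inv_closed gh by auto
      ultimately show ?thesis unfolding act_def
        using shift_mult[of x "inv\<^bsub>EG t\<^esub> h" t "inv\<^bsub>EG t\<^esub> g"] by simp
    qed
    show "(1::nat) = 1" by simp
    show "card (K t) * card {g \<in> carrier H. act g x = x} dvd card (carrier H) * 1" if x: "x \<in> cls t \<inter> S" for x
    proof -
      have xT: "x \<in> T" using x cls_sub by auto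
      have "{g \<in> carrier H. act g x = x} \<subseteq> {\<one>\<^bsub>EG t\<^esub>}"
      proof
        fix g assume g: "g \<in> {g \<in> carrier H. act g x = x}"
        then have gE: "g \<in> carrier (EG t)" using KE by auto
        have igE: "inv\<^bsub>EG t\<^esub> g \<in> EC t" using E.inv_closed[OF gE] by simp
        have "shift x (inv\<^bsub>EG t\<^esub> g) = x" using g unfolding act_def by simp
        then have i1: "inv\<^bsub>EG t\<^esub> g = \<one>\<^bsub>EG t\<^esub>" by (rule shift_fix[OF xT igE])
        have "g = inv\<^bsub>EG t\<^esub> (inv\<^bsub>EG t\<^esub> g)" using E.inv_inv[OF gE] by simp
        also have "\<dots> = \<one>\<^bsub>EG t\<^esub>" unfolding i1 by simp
        finally show "g \<in> {\<one>\<^bsub>EG t\<^esub>}" by simp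
      qed
      moreover have "\<one>\<^bsub>EG t\<^esub> \<in> {g \<in> carrier H. act g x = x}"
        using H.one_closed shift_one[OF xT] unfolding act_def by simp
      ultimately have "{g \<in> carrier H. act g x = x} = {\<one>\<^bsub>EG t\<^esub>}" by blast
      then show ?thesis by simp
    qed
  qed
  then show ?thesis by simp
qed

end

context cnt begin

lemma Z_finite: "finite Z" using finite_subset[OF Z_sub finN] .
lemma Z_pos: "card Z > 0" using Z_finite Z_one by (auto simp: card_gt_0_iff)

lemma EC_card: assumes t: "t \<in> T" shows "card (EC t) = card (Dx (t 0)) * card Z ^ (2*d - 1)"
proof -
  have "card (EC t) = (\<Prod>k\<in>{..<2*d}. card (if k = 1 then Dx (t 0) else Z))"
    unfolding EC_def by (rule card_PiE) simp
  also have "\<dots> = (\<Prod>k\<in>{..<2*d}. (if k = 1 then card (Dx (t 0)) else card Z))"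
    by (rule prod.cong) auto
  also have "\<dots> = card (Dx (t 0)) * (\<Prod>k\<in>{..<2*d} - {1}. (if k = 1 then card (Dx (t 0)) else card Z))"
    using d1 by (subst prod.remove[of _ 1]) auto
  also have "(\<Prod>k\<in>{..<2*d} - {1}. (if k = 1 then card (Dx (t 0)) else card Z)) = (\<Prod>k\<in>{..<2*d} - {1}. card Z)"
    by (rule prod.cong) auto
  also have "\<dots> = card Z ^ (2*d - 1)" using d1 by simp
  finally show ?thesis .
qed

lemma img_dvd: assumes t: "t \<in> T" shows "card (chi t ` EC t) dvd card Z"
proof -
  interpret gh: group_hom "EG t" ZG "chi t"
    by (simp add: group_hom_def group_hom_axioms_def EG_group[OF t] ZG_group chi_hom[OF t])
  have "subgroup (chi t ` carrier (EG t)) ZG" by (rule gh.img_is_subgroup)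
  moreover have "finite (carrier ZG)" using Z_finite by (simp add: ZG_def)
  ultimately have "card (chi t ` carrier (EG t)) dvd card (carrier ZG)" using group.card_sub_dvd[OF ZG_group] by blast
  then show ?thesis by (simp add: ZG_def)
qed

lemma card_EC_K: assumes t: "t \<in> T" shows "card (EC t) = card (chi t ` EC t) * card (K t)"
proof -
  have "card (carrier (EG t)) = card (chi t ` carrier (EG t)) * card {e \<in> carrier (EG t). chi t e = \<one>\<^bsub>ZG\<^esub>}"
    by (rule hom_card[OF EG_group[OF t] ZG_group chi_hom[OF t]]) (simp add: EC_finite)
  then show ?thesis by (simp add: K_def ZG_def)
qed

lemma Kbig: assumes t: "t \<in> T" shows "card (Dx (t 0)) * card Z ^ (2*d - 2) dvd card (K t)"
proof -
  define D where "D = card (Dx (t 0))"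
  define z where "z = card Z"
  define I where "I = card (chi t ` EC t)"
  define k where "k = card (K t)"
  have e: "D * z ^ (2*d - 1) = I * k" using EC_card[OF t] card_EC_K[OF t] unfolding D_def z_def I_def k_def by simp
  have Iz: "I dvd z" using img_dvd[OF t] unfolding I_def z_def .
  have zp: "z > 0" using Z_pos unfolding z_def .
  have ex: "2*d - 1 = Suc (2*d - 2)" using d1 by arith
  have "z ^ (2*d - 1) = z ^ (2*d - 2) * z" unfolding ex by (simp add: mult.commute)
  then have "D * z ^ (2*d - 2) * z = I * k" using e by (simp add: mult.assoc)
  then have "D * z ^ (2*d - 2) * z dvd z * k" using Iz by (simp add: mult_dvd_mono)
  then have "D * z ^ (2*d - 2) dvd k" using zp by (simp add: mult.commute)
  then show ?thesis unfolding D_def z_def k_def .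
qed

end

context cnt begin

definition "stab t = {g \<in> N. cj g ` cls t = cls t}"

lemma cj_one_img: "c \<subseteq> T \<Longrightarrow> cj \<one> ` c = c"
proof -
  assume c: "c \<subseteq> T"
  have "cj \<one> ` c = (\<lambda>x. x) ` c" by (rule image_cong) (use c cj_one in auto)
  then show ?thesis by simp
qed

lemma cj_comp_img: "g \<in> N \<Longrightarrow> h \<in> N \<Longrightarrow> c \<subseteq> T \<Longrightarrow> cj (g \<otimes> h) ` c = cj g ` (cj h ` c)"
proof -
  assume a: "g \<in> N" "h \<in> N" "c \<subseteq> T"
  have "cj (g \<otimes> h) ` c = (\<lambda>x. cj g (cj h x)) ` c" by (rule image_cong) (use a cj_comp in auto)
  then show ?thesis by (simp add: image_image)
qed

lemma stab_sg: assumes t: "t \<in> T" shows "subgroup (stab t) G"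
proof (rule subgroupI)
  show "stab t \<subseteq> carrier G" using N_carr by (auto simp: stab_def)
  have "\<one> \<in> stab t" using cj_one_img[OF cls_sub] subgroup.one_closed[OF N_sg] by (simp add: stab_def)
  then show "stab t \<noteq> {}" by auto
  fix g assume g: "g \<in> stab t"
  then have gN: "g \<in> N" and gs: "cj g ` cls t = cls t" by (auto simp: stab_def)
  have igN: "inv g \<in> N" using subgroup.m_inv_closed[OF N_sg gN] .
  have "cj (inv g) ` cls t = cj (inv g) ` (cj g ` cls t)" using gs by simp
  also have "\<dots> = cj (inv g \<otimes> g) ` cls t" using cj_comp_img[OF igN gN cls_sub] by simp
  also have "\<dots> = cls t" using cj_one_img[OF cls_sub] gN N_carr by simp
  finally show "inv g \<in> stab t" using igN by (simp add: stab_def)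
  fix h assume h: "h \<in> stab t"
  then have hN: "h \<in> N" and hs: "cj h ` cls t = cls t" by (auto simp: stab_def)
  have "cj (g \<otimes> h) ` cls t = cls t" using cj_comp_img[OF gN hN cls_sub] gs hs by simp
  then show "g \<otimes> h \<in> stab t" using subgroup.m_closed[OF N_sg gN hN] by (simp add: stab_def)
qed

lemma stab_dvd: assumes t: "t \<in> T" shows "card (stab t) dvd card (Dx (t 0))"
proof -
  have sub: "stab t \<subseteq> Dx (t 0)" using stab_Dx[OF t] by (auto simp: stab_def)
  have "subgroup (stab t) (G\<lparr>carrier := Dx (t 0)\<rparr>)"
    by (rule subgroup_incl[OF stab_sg[OF t] Dx_sg[OF t0c[OF t]] sub])
  moreover have "group (G\<lparr>carrier := Dx (t 0)\<rparr>)" by (rule subgroup_imp_group[OF Dx_sg[OF t0c[OF t]]])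
  moreover have "finite (Dx (t 0))" using finite_subset[OF Dx_N finN] .
  ultimately show ?thesis using group.card_sub_dvd[of "G\<lparr>carrier := Dx (t 0)\<rparr>" "stab t"] by simp
qed

lemma class_dvd: assumes t: "t \<in> T"
  shows "card N * card Z ^ (2*d - 2) * card (stab t) dvd card N * card (cls t \<inter> S)"
proof -
  have "card (stab t) * card Z ^ (2*d - 2) dvd card (Dx (t 0)) * card Z ^ (2*d - 2)"
    using stab_dvd[OF t] by (rule mult_dvd_mono) simp
  also have "\<dots> dvd card (K t)" by (rule Kbig[OF t])
  also have "\<dots> dvd card (cls t \<inter> S)" by (rule K_dvd[OF t])
  finally have "card (stab t) * card Z ^ (2*d - 2) dvd card (cls t \<inter> S)" .
  then have "card N * (card (stab t) * card Z ^ (2*d - 2)) dvd card N * card (cls t \<inter> S)"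
    by (rule mult_dvd_mono[OF dvd_refl])
  then show ?thesis by (simp add: mult.commute mult.left_commute)
qed

theorem main_dvd: "card N * card Z ^ (2*d - 2) dvd card S"
proof -
  define NG where "NG = G\<lparr>carrier := N\<rparr>"
  interpret NG: group NG unfolding NG_def by (rule subgroup_imp_group[OF N_sg])
  have NGc [simp]: "carrier NG = N" and NGm [simp]: "\<And>x y. x \<otimes>\<^bsub>NG\<^esub> y = x \<otimes> y"
    and NGo [simp]: "\<one>\<^bsub>NG\<^esub> = \<one>" by (simp_all add: NG_def)
  have "card N * card Z ^ (2*d - 2) dvd (\<Sum>c\<in>cls ` T. card (c \<inter> S))"
  proof (rule NG.orbit_div[of "cls ` T" "\<lambda>g c. cj g ` c"])
    show "finite (carrier NG)" using finN by simp
    show "finite (cls ` T)" using T_finite by simp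
    show "cj g ` c \<in> cls ` T" if "g \<in> carrier NG" "c \<in> cls ` T" for g c
      using that cj_cls cj_T by auto
    show "cj \<one>\<^bsub>NG\<^esub> ` c = c" if "c \<in> cls ` T" for c
      using that cj_one_img cls_sub by auto
    show "cj (g \<otimes>\<^bsub>NG\<^esub> h) ` c = cj g ` (cj h ` c)" if "g \<in> carrier NG" "h \<in> carrier NG" "c \<in> cls ` T" for g h c
    proof -
      obtain t where t: "c = cls t" using \<open>c \<in> cls ` T\<close> by auto
      show ?thesis unfolding t using cj_comp_img[of g h "cls t"] that cls_sub by simp
    qed
    show "card (cj g ` c \<inter> S) = card (c \<inter> S)" if "g \<in> carrier NG" "c \<in> cls ` T" for g c
      using that card_cj by auto
    show "card N * card Z ^ (2*d - 2) * card {g \<in> carrier NG. cj g ` c = c} dvd card (carrier NG) * card (c \<inter> S)"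
      if "c \<in> cls ` T" for c
    proof -
      obtain t where t: "t \<in> T" "c = cls t" using \<open>c \<in> cls ` T\<close> by auto
      have "{g \<in> carrier NG. cj g ` c = c} = stab t" using t by (simp add: stab_def)
      then show ?thesis using class_dvd[OF t(1)] t by simp
    qed
  qed
  then show ?thesis using card_S_sum by simp
qed

end

lemma hom_FR:
  assumes gP: "group P" and gH: "group H" and h: "h \<in> hom P H"
    and c: "\<forall>i\<in>set l. x i \<in> carrier P \<and> y i \<in> carrier P"
  shows "h (FR P l x y) = FR H l (\<lambda>i. h (x i)) (\<lambda>i. h (y i))"
  using c
proof (induction l)
  case Nil then show ?case using gP gH h
    by (simp add: group_hom.hom_one group_hom_def group_hom_axioms_def)
next
  case (Cons i l)
  interpret gh: group_hom P H h by (simp add: group_hom_def group_hom_axioms_def gP gH h)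
  have ci: "x i \<in> carrier P" "y i \<in> carrier P" using Cons.prems by auto
  have F: "FR P l x y \<in> carrier P" using Cons.prems
    by (induction l) (auto simp: grp_commutator_def)
  have "h (grp_commutator P (x i) (y i)) = grp_commutator H (h (x i)) (h (y i))"
    unfolding grp_commutator_def using ci by simp
  moreover have "grp_commutator P (x i) (y i) \<in> carrier P" using ci by (simp add: grp_commutator_def)
  ultimately show ?case using Cons F by simp
qed

lemma hom_agree_generate:
  assumes gP: "group P" and gH: "group H" and h1: "h1 \<in> hom P H" and h2: "h2 \<in> hom P H"
    and S: "S \<subseteq> carrier P" and ag: "\<And>s. s \<in> S \<Longrightarrow> h1 s = h2 s" and x: "x \<in> generate P S"
  shows "h1 x = h2 x"
proof -
  interpret g1: group_hom P H h1 by (simp add: group_hom_def group_hom_axioms_def gP gH h1)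
  interpret g2: group_hom P H h2 by (simp add: group_hom_def group_hom_axioms_def gP gH h2)
  show ?thesis using x
  proof (induction rule: generate.induct)
    case one then show ?case by simp
  next
    case (incl h) then show ?case using ag by simp
  next
    case (inv h) then show ?case using ag S by auto
  next
    case (eng h1' h2')
    have "h1' \<in> carrier P" "h2' \<in> carrier P"
      using eng.hyps S by (auto intro: group.generate_in_carrier[OF gP])
    then show ?case using eng by simp
  qed
qed

theorem theorem2p1:
  fixes G' :: "('c, 'e) monoid_scheme" and G :: "('g, 'h) monoid_scheme"
    and P :: "('p, 'f) monoid_scheme"
    and q :: "'c \<Rightarrow> 'g" and g :: "'p \<Rightarrow> 'g"
    and d :: nat and a b :: "nat \<Rightarrow> 'p"
  assumes "group G'" and "group G"
    and "q \<in> hom G' G" and "q ` carrier G' = carrier G"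
    and "finite (kernel G' G q)"
    and "d \<ge> 1"
    and "surface_presented_wrt P d a b G'"
    and "surface_presented_wrt P d a b G"
    and "g \<in> hom P G"
  shows "card (kernel G' G q) * card (center_of G' (kernel G' G q)) ^ (2 * d - 2)
           dvd card (Hom_lifts P G' q g)"
proof -
  note gG' = assms(1) and gG = assms(2) and qh = assms(3) and qs = assms(4) and fin = assms(5)
    and d1 = assms(6) and sp = assms(7) and gh = assms(9)
  define N where "N = kernel G' G q"
  interpret qg: group_hom G' G q by (simp add: group_hom_def group_hom_axioms_def gG' gG qh)
  interpret zsetup G' N unfolding N_def using qg.normal_kernel gG' by (simp add: zsetup_def zsetup_axioms_def)
  note spd = sp[unfolded surface_presented_wrt_def]
  have gP: "group P" using spd by (rule conjunct1)
  have abc: "\<forall>i<d. a i \<in> carrier P \<and> b i \<in> carrier P" using spd[THEN conjunct2] by (rule conjunct1)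
  have gen: "generate P (a ` {..<d} \<union> b ` {..<d}) = carrier P"
    using spd[THEN conjunct2, THEN conjunct2] by (rule conjunct1)
  have relP: "surface_relator P d a b = \<one>\<^bsub>P\<^esub>"
    using spd[THEN conjunct2, THEN conjunct2, THEN conjunct2] by (rule conjunct1)
  have exq: "\<forall>x y. (\<forall>i<d. x i \<in> carrier G' \<and> y i \<in> carrier G') \<and> surface_relator G' d x y = \<one>\<^bsub>G'\<^esub>
        \<longrightarrow> (\<exists>h\<in>hom P G'. \<forall>i<d. h (a i) = x i \<and> h (b i) = y i)"
    using spd[THEN conjunct2, THEN conjunct2, THEN conjunct2] by (rule conjunct2)
  interpret gpP: group_hom P G g by (simp add: group_hom_def group_hom_axioms_def gP gG gh)
  define w where "w k = (if even k then g (a (k div 2)) else g (b (k div 2)))" for k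
  define r where "r k = (SOME c. c \<in> carrier G' \<and> q c = w k)" for k
  have wc: "w k \<in> carrier G" if "k < 2*d" for k
  proof -
    have kd: "k div 2 < d" using that by arith
    then have "a (k div 2) \<in> carrier P" "b (k div 2) \<in> carrier P" using abc by blast+
    then show ?thesis unfolding w_def using gpP.hom_closed by simp
  qed
  have rprop: "r k \<in> carrier G' \<and> q (r k) = w k" if "k < 2*d" for k
  proof -
    have "w k \<in> q ` carrier G'" using wc[OF that] unfolding qs .
    then obtain c where c1: "w k = q c" and c2: "c \<in> carrier G'" by (rule imageE)
    have "c \<in> carrier G' \<and> q c = w k" using c1 c2 by simp
    then have "\<exists>c. c \<in> carrier G' \<and> q c = w k" by (rule exI)
    then have "(SOME c. c \<in> carrier G' \<and> q c = w k) \<in> carrier G' \<and> q (SOME c. c \<in> carrier G' \<and> q c = w k) = w k"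
      by (rule someI_ex[of "\<lambda>c. c \<in> carrier G' \<and> q c = w k"])
    then show ?thesis unfolding r_def .
  qed
  interpret cnt G' N d r
  proof unfold_locales
    show "\<And>k. k < 2 * d \<Longrightarrow> r k \<in> carrier G'" using rprop by simp
    show "1 \<le> d" using d1 .
    show "finite N" using fin unfolding N_def .
  qed
  have congq: "cong (r k) c \<longleftrightarrow> c \<in> carrier G' \<and> q c = w k" if k: "k < 2*d" for k c
  proof -
    have rc: "r k \<in> carrier G'" and rk: "q (r k) = w k" using rprop[OF k] by auto
    have qrc: "q (r k) \<in> carrier G" using rc by simp
    show ?thesis
    proof
      assume "cong (r k) c"
      then have c: "c \<in> carrier G'" "inv\<^bsub>G'\<^esub> (r k) \<otimes>\<^bsub>G'\<^esub> c \<in> N" by (auto simp: cong_def)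
      have qcc: "q c \<in> carrier G" using c by simp
      have "q (inv\<^bsub>G'\<^esub> (r k) \<otimes>\<^bsub>G'\<^esub> c) = \<one>\<^bsub>G\<^esub>" using c by (simp add: N_def kernel_def)
      then have X: "inv\<^bsub>G\<^esub> (q (r k)) \<otimes>\<^bsub>G\<^esub> q c = \<one>\<^bsub>G\<^esub>" using rc c by simp
      have Y: "q c = q (r k) \<otimes>\<^bsub>G\<^esub> (inv\<^bsub>G\<^esub> (q (r k)) \<otimes>\<^bsub>G\<^esub> q c)"
        using qcc qrc by (simp add: qg.H.m_assoc[symmetric])
      have "q c = q (r k)" using Y unfolding X using qrc by simp
      then show "c \<in> carrier G' \<and> q c = w k" using c(1) rk by simp
    next
      assume c: "c \<in> carrier G' \<and> q c = w k"
      then have "q c = q (r k)" using rk by simp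
      then have "q (inv\<^bsub>G'\<^esub> (r k) \<otimes>\<^bsub>G'\<^esub> c) = \<one>\<^bsub>G\<^esub>" using rc c qrc by simp
      moreover have "inv\<^bsub>G'\<^esub> (r k) \<otimes>\<^bsub>G'\<^esub> c \<in> carrier G'" using rc c by simp
      ultimately have "inv\<^bsub>G'\<^esub> (r k) \<otimes>\<^bsub>G'\<^esub> c \<in> N" by (simp add: N_def kernel_def)
      then show "cong (r k) c" using rc c by (simp add: cong_def)
    qed
  qed
  define Phi where "Phi h = (\<lambda>k\<in>{..<2*d}. if even k then h (a (k div 2)) else h (b (k div 2)))" for h :: "'p \<Rightarrow> 'c"
  have Phi_even: "Phi h (2*i) = h (a i)" and Phi_odd: "Phi h (2*i+1) = h (b i)" if "i < d" for h i
  proof -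
    show "Phi h (2*i) = h (a i)" using that unfolding Phi_def by simp
    show "Phi h (2*i+1) = h (b i)" using that unfolding Phi_def by simp
  qed
  have bij: "bij_betw Phi (Hom_lifts P G' q g) S"
  proof (rule bij_betw_imageI)
    show "inj_on Phi (Hom_lifts P G' q g)"
    proof (rule inj_onI)
      fix h1 h2 assume h1: "h1 \<in> Hom_lifts P G' q g" and h2: "h2 \<in> Hom_lifts P G' q g" and e: "Phi h1 = Phi h2"
      have hh: "h1 \<in> hom P G'" "h2 \<in> hom P G'" "h1 \<in> extensional (carrier P)" "h2 \<in> extensional (carrier P)"
        using h1 h2 by (simp_all add: Hom_lifts_def)
      have ag: "h1 s = h2 s" if "s \<in> a ` {..<d} \<union> b ` {..<d}" for s
      proof -
        from that obtain i where i: "i < d" "s = a i \<or> s = b i" by auto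
        have "h1 (a i) = h2 (a i)" using Phi_even[OF i(1), of h1] Phi_even[OF i(1), of h2] e by simp
        moreover have "h1 (b i) = h2 (b i)" using Phi_odd[OF i(1), of h1] Phi_odd[OF i(1), of h2] e by simp
        ultimately show ?thesis using i(2) by auto
      qed
      have sub: "a ` {..<d} \<union> b ` {..<d} \<subseteq> carrier P" using abc by auto
      have eq: "h1 x = h2 x" if "x \<in> carrier P" for x
      proof -
        have "x \<in> generate P (a ` {..<d} \<union> b ` {..<d})" using that gen by simp
        from hom_agree_generate[OF gP gG' hh(1,2) sub ag this] show ?thesis .
      qed
      show "h1 = h2"
      proof (rule ext)
        fix x show "h1 x = h2 x"
        proof (cases "x \<in> carrier P")
          case True then show ?thesis by (rule eq)
        next
          case False then show ?thesis using hh(3,4) by (simp add: extensional_def)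
        qed
      qed
    qed
    show "Phi ` Hom_lifts P G' q g = S"
    proof (rule Set.set_eqI, rule iffI)
      fix t assume "t \<in> Phi ` Hom_lifts P G' q g"
      then obtain h where h: "h \<in> Hom_lifts P G' q g" and t: "t = Phi h" by (rule imageE)
      have hh: "h \<in> hom P G'" and hq: "\<forall>x\<in>carrier P. q (h x) = g x" using h by (simp_all add: Hom_lifts_def)
      have hc: "h x \<in> carrier G'" if "x \<in> carrier P" for x using hh that by (simp add: hom_def Pi_def)
      have tT: "t \<in> T" unfolding T_def t
      proof (rule PiE_I)
        fix k assume k: "k \<in> {..<2*d}"
        then have kk: "k < 2*d" by simp
        have kd: "k div 2 < d" using kk by arith
        have ac: "a (k div 2) \<in> carrier P" "b (k div 2) \<in> carrier P" using abc kd by simp_all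
        have "Phi h k \<in> carrier G' \<and> q (Phi h k) = w k"
        proof (cases "even k")
          case True then show ?thesis using kk ac hc hq unfolding Phi_def w_def by simp
        next
          case False then show ?thesis using kk ac hc hq unfolding Phi_def w_def by simp
        qed
        then show "Phi h k \<in> {c. cong (r k) c}" using congq[OF kk] by simp
      next
        fix k assume "k \<notin> {..<2*d}" then show "Phi h k = undefined" by (simp add: Phi_def)
      qed
      have "R t = FR G' [0..<d] (\<lambda>i. h (a i)) (\<lambda>i. h (b i))"
        unfolding R_def t by (rule FR_cong) (simp add: Phi_even Phi_odd[simplified])
      also have "\<dots> = h (FR P [0..<d] a b)" using hom_FR[OF gP gG' hh] abc by simp
      also have "FR P [0..<d] a b = \<one>\<^bsub>P\<^esub>" using relP unfolding surface_relator_FR .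
      also have "h \<one>\<^bsub>P\<^esub> = \<one>\<^bsub>G'\<^esub>" using gP gG' hh by (simp add: group_hom.hom_one group_hom_def group_hom_axioms_def)
      finally show "t \<in> S" using tT by (simp add: S_def)
    next
      fix t assume t: "t \<in> S"
      then have tT: "t \<in> T" and Rt: "R t = \<one>\<^bsub>G'\<^esub>" by (simp_all add: S_def)
      have "(\<forall>i<d. t (2*i) \<in> carrier G' \<and> t (2*i+1) \<in> carrier G') \<and>
          surface_relator G' d (\<lambda>i. t (2*i)) (\<lambda>i. t (2*i+1)) = \<one>\<^bsub>G'\<^esub>"
        using T_carr[OF tT] Rt by (simp add: R_def surface_relator_FR)
      then have "\<exists>h\<in>hom P G'. \<forall>i<d. h (a i) = t (2*i) \<and> h (b i) = t (2*i+1)"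
        using exq by simp
      then obtain h where hh: "h \<in> hom P G'" and hab: "\<forall>i<d. h (a i) = t (2*i) \<and> h (b i) = t (2*i+1)"
        by (rule bexE)
      define h' where "h' = restrict h (carrier P)"
      have h'h: "h' \<in> hom P G'" using hh unfolding h'_def by (simp add: hom_def Pi_def)
      have qgh: "(\<lambda>x. q (h x)) \<in> hom P G" using hom_compose[OF hh qh] by (simp add: comp_def)
      have agq: "q (h s) = g s" if "s \<in> a ` {..<d} \<union> b ` {..<d}" for s
      proof -
        from that obtain i where i: "i < d" "s = a i \<or> s = b i" by auto
        have k: "2*i < 2*d" "2*i+1 < 2*d" using i by auto
        have "q (t (2*i)) = w (2*i)" using congq[OF k(1)] T_cong[OF tT k(1)] by simp
        moreover have "q (t (2*i+1)) = w (2*i+1)" using congq[OF k(2)] T_cong[OF tT k(2)] by simp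
        ultimately have "q (h (a i)) = g (a i)" "q (h (b i)) = g (b i)" using hab i(1) unfolding w_def by simp_all
        then show ?thesis using i(2) by auto
      qed
      have sub: "a ` {..<d} \<union> b ` {..<d} \<subseteq> carrier P" using abc by auto
      have qeq: "q (h x) = g x" if "x \<in> carrier P" for x
      proof -
        have "x \<in> generate P (a ` {..<d} \<union> b ` {..<d})" using that gen by simp
        from hom_agree_generate[OF gP gG qgh gh sub agq this] show ?thesis .
      qed
      have "h' \<in> Hom_lifts P G' q g" using h'h qeq unfolding Hom_lifts_def h'_def by simp
      moreover have "Phi h' = t"
      proof (rule ext)
        fix k show "Phi h' k = t k"
        proof (cases "k < 2*d")
          case True
          then have kd: "k div 2 < d" by arith
          show ?thesis
          proof (cases "even k")
            case True
            then have e: "2 * (k div 2) = k" by simp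
            have "Phi h' k = h' (a (k div 2))" using True \<open>k < 2*d\<close> by (simp add: Phi_def)
            also have "\<dots> = h (a (k div 2))" using abc kd by (simp add: h'_def)
            also have "\<dots> = t (2 * (k div 2))" using hab kd by simp
            finally show ?thesis unfolding e .
          next
            case False
            then have e: "2 * (k div 2) + 1 = k" by presburger
            have "Phi h' k = h' (b (k div 2))" using False \<open>k < 2*d\<close> by (simp add: Phi_def)
            also have "\<dots> = h (b (k div 2))" using abc kd by (simp add: h'_def)
            also have "\<dots> = t (2 * (k div 2) + 1)" using hab kd by simp
            finally show ?thesis unfolding e .
          qed
        next
          case False
          then show ?thesis using T_ext[OF tT] unfolding Phi_def by simp
        qed
      qed
      ultimately show "t \<in> Phi ` Hom_lifts P G' q g" using image_eqI[of t Phi h' "Hom_lifts P G' q g"] by simp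
    qed
  qed
  have "card (Hom_lifts P G' q g) = card S" using bij by (rule bij_betw_same_card)
  then show ?thesis using main_dvd unfolding N_def by simp
qed

end
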